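(* Let $X$ be a topological space and $U,V\subset X$ path-connected open subsets with $X=U\cup V$, such that $U\cap V$ has $m+1$ path-connected components $A_0,A_1,\dots,A_m$, $m\ge 1$. Let $a_i\in A_i$ for each $i$ and $Y=\{a_0,a_1,\dots,a_m\}$, and let $G$ be a group. Then the square of restriction maps $H^1(X,Y)\xrightarrow{r_U}H^1(U,Y)\xrightarrow{r_{U\cap V}}H^1(U\cap V,Y)$, $H^1(X,Y)\xrightarrow{r_V}H^1(V,Y)\xrightarrow{r_{U\cap V}}H^1(U\cap V,Y)$ is commutative and cartesian (i.e. $(r_U,r_V)$ is a bijection from $H^1(X,Y)$ onto the fibered product of $H^1(U,Y)$ and $H^1(V,Y)$ over $H^1(U\cap V,Y)$). Moreover there is a canonical bijection between $H^1(U\cap V,Y)$ and $\prod_i H^1(A_i,a_i)$, given by restricting to the components $A_i$.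
   Context: Conventions: a path in $W$ is a continuous map $[0,1]\to W$; $P(W)$ is the set of paths; $p\cdot q$ is concatenation; homotopies of paths are relative to $\{0,1\}$, $\sim$ denotes homotopy. $G$ has unit $1$. For $Y\subset W$: a $0$-cochain of $(W,Y)$ is $c\colon W\to G$ with $c|_Y=1$, forming a group $C^0(W,Y)$ under pointwise multiplication. A $1$-cochain is $u\colon P(W)\to G$ with $u(p)=1$ for paths in $Y$; a cocycle satisfies $u(p)=u(q)$ if $p\sim q$ and $u(p\cdot q)=u(p)u(q)$ when defined. $C^0(W,Y)$ acts on cocycles by $(c\bullet u)(p)=c(p(0))u(p)c(p(1))^{-1}$; $H^1(W,Y)$ is the orbit set; $(W,b)=(W,\{b\})$. For $S\subset W$, $r_S\colon H^1(W,Y)\to H^1(S,Y\cap S)$ is induced by restricting cocycles to paths in $S$. *)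

theory Defs
  imports "HOL-Analysis.Analysis" "HOL-Algebra.Group"
begin

text \<open>Paths in (the topological space) T are maps [0,1] -> T, i.e. pathin T.
  A subset W of X is represented by the subspace topology subtopology X W.\<close>

definition pjoin :: "(real \<Rightarrow> 'a) \<Rightarrow> (real \<Rightarrow> 'a) \<Rightarrow> real \<Rightarrow> 'a" where
  "pjoin p q = (\<lambda>t. if t \<le> 1/2 then p (2 * t) else q (2 * t - 1))"

definition path_homotopic :: "'a topology \<Rightarrow> (real \<Rightarrow> 'a) \<Rightarrow> (real \<Rightarrow> 'a) \<Rightarrow> bool" where
  "path_homotopic T p q \<longleftrightarrow>
     homotopic_with (\<lambda>r. r 0 = p 0 \<and> r 1 = p 1) (top_of_set {0..1}) T p q"

definition cochain0 :: "('g,'b) monoid_scheme \<Rightarrow> 'a topology \<Rightarrow> 'a set \<Rightarrow> ('a \<Rightarrow> 'g) set" where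
  "cochain0 G T Y = {c. (\<forall>x\<in>topspace T. c x \<in> carrier G)
                      \<and> (\<forall>x\<in>Y. c x = \<one>\<^bsub>G\<^esub>)
                      \<and> (\<forall>x. x \<notin> topspace T \<longrightarrow> c x = \<one>\<^bsub>G\<^esub>)}"

definition cocycle :: "('g,'b) monoid_scheme \<Rightarrow> 'a topology \<Rightarrow> 'a set \<Rightarrow> ((real \<Rightarrow> 'a) \<Rightarrow> 'g) set" where
  "cocycle G T Y = {u.
      (\<forall>p. pathin T p \<longrightarrow> u p \<in> carrier G)
    \<and> (\<forall>p. \<not> pathin T p \<longrightarrow> u p = \<one>\<^bsub>G\<^esub>)
    \<and> (\<forall>p. pathin T p \<and> p ` {0..1} \<subseteq> Y \<longrightarrow> u p = \<one>\<^bsub>G\<^esub>)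
    \<and> (\<forall>p q. pathin T p \<and> pathin T q \<and> path_homotopic T p q \<longrightarrow> u p = u q)
    \<and> (\<forall>p q. pathin T p \<and> pathin T q \<and> p 1 = q 0 \<longrightarrow> u (pjoin p q) = u p \<otimes>\<^bsub>G\<^esub> u q)}"

definition cact :: "('g,'b) monoid_scheme \<Rightarrow> 'a topology \<Rightarrow> ('a \<Rightarrow> 'g) \<Rightarrow> ((real \<Rightarrow> 'a) \<Rightarrow> 'g)
                    \<Rightarrow> (real \<Rightarrow> 'a) \<Rightarrow> 'g" where
  "cact G T c u = (\<lambda>p. if pathin T p
        then c (p 0) \<otimes>\<^bsub>G\<^esub> u p \<otimes>\<^bsub>G\<^esub> inv\<^bsub>G\<^esub> (c (p 1)) else \<one>\<^bsub>G\<^esub>)"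

definition cls :: "('g,'b) monoid_scheme \<Rightarrow> 'a topology \<Rightarrow> 'a set \<Rightarrow> ((real \<Rightarrow> 'a) \<Rightarrow> 'g)
                   \<Rightarrow> ((real \<Rightarrow> 'a) \<Rightarrow> 'g) set" where
  "cls G T Y u = {cact G T c u | c. c \<in> cochain0 G T Y}"

definition H1 :: "('g,'b) monoid_scheme \<Rightarrow> 'a topology \<Rightarrow> 'a set \<Rightarrow> ((real \<Rightarrow> 'a) \<Rightarrow> 'g) set set" where
  "H1 G T Y = cls G T Y ` cocycle G T Y"

definition restr :: "('g,'b) monoid_scheme \<Rightarrow> 'a topology \<Rightarrow> 'a set \<Rightarrow> ((real \<Rightarrow> 'a) \<Rightarrow> 'g)
                     \<Rightarrow> (real \<Rightarrow> 'a) \<Rightarrow> 'g" where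
  "restr G T S u = (\<lambda>p. if pathin (subtopology T S) p then u p else \<one>\<^bsub>G\<^esub>)"

definition rmap :: "('g,'b) monoid_scheme \<Rightarrow> 'a topology \<Rightarrow> 'a set \<Rightarrow> 'a set
                    \<Rightarrow> ((real \<Rightarrow> 'a) \<Rightarrow> 'g) set \<Rightarrow> ((real \<Rightarrow> 'a) \<Rightarrow> 'g) set" where
  "rmap G T S Y k = cls G (subtopology T S) (Y \<inter> S) (restr G T S (SOME u. u \<in> k))"

end

theory Submission
  imports Defs
begin

definition seg :: "(real \<Rightarrow> 'a) \<Rightarrow> real \<Rightarrow> real \<Rightarrow> real \<Rightarrow> 'a" where
  "seg \<gamma> a b = \<gamma> \<circ> linepath a b"

lemma lp0 [simp]: "linepath a b 0 = a" and lp1 [simp]: "linepath a b 1 = b"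
  by (simp_all add: linepath_def)

lemma pjoin_0 [simp]: "pjoin p q 0 = p 0" and pjoin_1 [simp]: "pjoin p q 1 = q 1"
  by (simp_all add: pjoin_def)

lemma comp_pjoin: "g \<circ> pjoin a b = pjoin (g \<circ> a) (g \<circ> b)"
  by (auto simp: pjoin_def fun_eq_iff)

lemma pathin_pjoin:
  assumes p: "pathin T p" and q: "pathin T q" and pq: "p 1 = q 0"
  shows "pathin T (pjoin p q)"
proof -
  have "continuous_map (top_of_set {0..1}) T (\<lambda>x. if id x \<le> (\<lambda>_. 1/2) x then (p \<circ> (\<lambda>t. 2*t)) x else (q \<circ> (\<lambda>t. 2*t - 1)) x)"
  proof (rule continuous_map_cases_le)
    show "continuous_map (top_of_set {0..1}) euclideanreal id" by simp
    show "continuous_map (top_of_set {0..1}) euclideanreal (\<lambda>_. 1/2)" by simp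
    have e1: "subtopology (top_of_set {0..1}) {x \<in> topspace (top_of_set {0..1::real}). id x \<le> 1/2} = top_of_set {0..1/2}"
      by (simp add: subtopology_subtopology, intro arg_cong[where f="top_of_set"]) auto
    have "continuous_map (top_of_set {0..1/2}) (top_of_set {0..1}) (\<lambda>t::real. 2*t)"
      unfolding continuous_map_subtopology_eu by (rule conjI, (intro continuous_intros)[1], auto)
    then show "continuous_map (subtopology (top_of_set {0..1}) {x \<in> topspace (top_of_set {0..1::real}). id x \<le> 1/2}) T (p \<circ> (\<lambda>t. 2*t))"
      unfolding e1 using p pathin_def continuous_map_compose by blast
    have e2: "subtopology (top_of_set {0..1}) {x \<in> topspace (top_of_set {0..1::real}). 1/2 \<le> id x} = top_of_set {1/2..1}"
      by (simp add: subtopology_subtopology, intro arg_cong[where f="top_of_set"]) auto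
    have "continuous_map (top_of_set {1/2..1}) (top_of_set {0..1}) (\<lambda>t::real. 2*t - 1)"
      unfolding continuous_map_subtopology_eu by (rule conjI, (intro continuous_intros)[1], auto)
    then show "continuous_map (subtopology (top_of_set {0..1}) {x \<in> topspace (top_of_set {0..1::real}). 1/2 \<le> id x}) T (q \<circ> (\<lambda>t. 2*t - 1))"
      unfolding e2 using q pathin_def continuous_map_compose by blast
  qed (use pq in \<open>auto simp: mult.commute\<close>)
  moreover have "(\<lambda>x. if id x \<le> (\<lambda>_. 1/2) x then (p \<circ> (\<lambda>t. 2*t)) x else (q \<circ> (\<lambda>t. 2*t - 1)) x) = pjoin p q"
    by (auto simp: pjoin_def fun_eq_iff)
  ultimately show ?thesis by (simp add: pathin_def)
qed

lemma KT:
  fixes C :: "'v::real_normed_vector set"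
  assumes C: "convex C" and g: "continuous_map (top_of_set C) T g"
    and a: "pathin (top_of_set C) \<alpha>" and b: "pathin (top_of_set C) \<beta>"
    and e0: "\<alpha> 0 = \<beta> 0" and e1: "\<alpha> 1 = \<beta> 1"
  shows "path_homotopic T (g \<circ> \<alpha>) (g \<circ> \<beta>)"
proof -
  have ca: "continuous_on {0..1} \<alpha>" "\<alpha> \<in> {0..1} \<rightarrow> C"
    and cb: "continuous_on {0..1} \<beta>" "\<beta> \<in> {0..1} \<rightarrow> C"
    using a b by (auto simp: pathin_canon_iff path_def)
  define k where "k = (\<lambda>z::real\<times>real. (1 - fst z) *\<^sub>R \<alpha> (snd z) + fst z *\<^sub>R \<beta> (snd z))"
  have s1: "continuous_on ({0..1}\<times>{0..1}) (snd :: real\<times>real \<Rightarrow> real)"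
    by (intro continuous_intros)
  have a1: "continuous_on ({0..1}\<times>{0..1}) (\<lambda>z::real\<times>real. \<alpha> (snd z))"
    by (rule continuous_on_compose2[OF ca(1) s1]) auto
  have b1: "continuous_on ({0..1}\<times>{0..1}) (\<lambda>z::real\<times>real. \<beta> (snd z))"
    by (rule continuous_on_compose2[OF cb(1) s1]) auto
  have kc: "continuous_on ({0..1}\<times>{0..1}) k"
    unfolding k_def by (intro continuous_intros a1 b1)
  have kC: "k \<in> ({0..1}\<times>{0..1}) \<rightarrow> C"
  proof
    fix z :: "real \<times> real" assume z: "z \<in> {0..1}\<times>{0..1}"
    then have "\<alpha> (snd z) \<in> C" "\<beta> (snd z) \<in> C" "0 \<le> fst z" "fst z \<le> 1"
      using ca(2) cb(2) by (auto simp: Pi_iff mem_Times_iff)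
    then show "k z \<in> C" unfolding k_def by (rule convexD_alt[OF C])
  qed
  have "continuous_map (top_of_set ({0..1}\<times>{0..1})) (top_of_set C) k"
    using kc kC by simp
  then have hc0: "continuous_map (top_of_set ({0..1}\<times>{0..1})) T (g \<circ> k)"
    using g by (rule continuous_map_compose)
  have pe: "prod_topology (top_of_set {0..1}) (top_of_set {0..1::real}) = top_of_set ({0..1}\<times>{0..1::real})"
    by simp
  have hc: "continuous_map (prod_topology (top_of_set {0..1}) (top_of_set {0..1})) T (g \<circ> k)"
    unfolding pe by (rule hc0)
  have x0: "g (k (0, x)) = g (\<alpha> x)" and x1: "g (k (1, x)) = g (\<beta> x)" for x
    by (simp_all add: k_def)
  have t01: "g (k (t, 0)) = g (\<alpha> 0) \<and> g (k (t, 1)) = g (\<alpha> 1)" for t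
  proof -
    have "(1 - t) *\<^sub>R \<alpha> 0 + t *\<^sub>R \<alpha> 0 = \<alpha> 0" "(1 - t) *\<^sub>R \<alpha> 1 + t *\<^sub>R \<alpha> 1 = \<alpha> 1"
      by (simp_all flip: scaleR_add_left)
    then show ?thesis by (simp add: k_def e0[symmetric] e1[symmetric])
  qed
  show ?thesis
    unfolding path_homotopic_def homotopic_with_def
    by (rule exI[of _ "g \<circ> k"]) (simp add: hc0 x0 x1 t01)
qed

lemma pathin_linepath:
  fixes C :: "'v::real_normed_vector set"
  assumes "convex C" "a \<in> C" "b \<in> C"
  shows "pathin (top_of_set C) (linepath a b)"
proof -
  have "linepath a b x \<in> C" if "x \<in> {0..1}" for x
  proof -
    have "linepath a b x \<in> closed_segment a b" using that by (metis linepath_image_01 imageI)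
    then show ?thesis using assms convex_contains_segment by blast
  qed
  then show ?thesis by (auto simp: pathin_canon_iff)
qed

lemma pathin_seg:
  assumes "pathin T \<gamma>" "a \<in> {0..1}" "b \<in> {0..1}"
  shows "pathin T (seg \<gamma> a b)"
proof -
  have "pathin (top_of_set {0..1}) (linepath a b)"
    using assms by (intro pathin_linepath) auto
  then have "continuous_map (top_of_set {0..1}) (top_of_set {0..1}) (linepath a b)"
    by (simp add: pathin_def)
  then show ?thesis using assms(1) unfolding seg_def pathin_def
    using continuous_map_compose by blast
qed

lemma seg_0 [simp]: "seg \<gamma> a b 0 = \<gamma> a" and seg_1 [simp]: "seg \<gamma> a b 1 = \<gamma> b"
  by (simp_all add: seg_def linepath_def)

lemma seg_seg: "seg (seg \<gamma> a b) c d = seg \<gamma> ((1-c)*a + c*b) ((1-d)*a + d*b)"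
  by (auto simp: seg_def linepath_def fun_eq_iff algebra_simps)

lemma seg_image: "a \<le> b \<Longrightarrow> seg \<gamma> a b ` {0..1} = \<gamma> ` {a..b}"
proof -
  assume "a \<le> b"
  then have "linepath a b ` {0..1} = {a..b}" by (simp add: linepath_image_01 closed_segment_eq_real_ivl)
  then show ?thesis unfolding seg_def image_comp[symmetric] by simp
qed

lemma seg_01: "t \<in> {0..1} \<Longrightarrow> seg \<gamma> 0 1 t = \<gamma> t"
  by (simp add: seg_def linepath_def)

primrec gp :: "('g,'b) monoid_scheme \<Rightarrow> (nat \<Rightarrow> 'g) \<Rightarrow> nat \<Rightarrow> 'g" where
  "gp G f 0 = \<one>\<^bsub>G\<^esub>"
| "gp G f (Suc n) = gp G f n \<otimes>\<^bsub>G\<^esub> f n"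

context group
begin

lemma gp_carrier: "(\<And>k. k < n \<Longrightarrow> f k \<in> carrier G) \<Longrightarrow> gp G f n \<in> carrier G"
  by (induction n) auto

lemma gp_cong: "(\<And>k. k < n \<Longrightarrow> f k = g k) \<Longrightarrow> gp G f n = gp G g n"
  by (induction n) auto

lemma gp_one: "gp G f (Suc 0) = f 0 \<Longrightarrow> True" by simp

lemma gp_1: "f 0 \<in> carrier G \<Longrightarrow> gp G f (Suc 0) = f 0"
  by simp

lemma gp_add:
  assumes "\<And>k. k < a + b \<Longrightarrow> f k \<in> carrier G"
  shows "gp G f (a + b) = gp G f a \<otimes> gp G (\<lambda>i. f (a + i)) b"
  using assms
proof (induction b)
  case 0
  then show ?case by (simp add: gp_carrier)
next
  case (Suc b)
  have "gp G f (a + Suc b) = (gp G f a \<otimes> gp G (\<lambda>i. f (a + i)) b) \<otimes> f (a + b)"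
    using Suc by simp
  also have "\<dots> = gp G f a \<otimes> (gp G (\<lambda>i. f (a + i)) b \<otimes> f (a + b))"
    using Suc.prems by (intro m_assoc gp_carrier) auto
  finally show ?case by simp
qed

lemma gp_mult:
  assumes "\<And>k. k < n * m \<Longrightarrow> f k \<in> carrier G"
  shows "gp G f (n * m) = gp G (\<lambda>k. gp G (\<lambda>i. f (k * m + i)) m) n"
  using assms
proof (induction n)
  case 0
  then show ?case by simp
next
  case (Suc n)
  have "gp G f (Suc n * m) = gp G f (n * m + m)" by (simp add: add.commute)
  also have "\<dots> = gp G f (n * m) \<otimes> gp G (\<lambda>i. f (n * m + i)) m"
    using Suc.prems by (intro gp_add) (auto simp: add.commute)
  also have "gp G f (n * m) = gp G (\<lambda>k. gp G (\<lambda>i. f (k * m + i)) m) n"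
    using Suc.prems by (intro Suc.IH) (simp add: trans_less_add2)
  finally show ?case by simp
qed

lemma gp_tele:
  assumes "\<And>k. k \<le> n \<Longrightarrow> a k \<in> carrier G" "\<And>k. k < n \<Longrightarrow> b k \<in> carrier G"
  shows "gp G (\<lambda>k. a k \<otimes> b k \<otimes> inv (a (Suc k))) n = a 0 \<otimes> gp G b n \<otimes> inv (a n)"
  using assms
proof (induction n)
  case 0
  then show ?case by simp
next
  case (Suc n)
  have ab: "a n \<in> carrier G" "a (Suc n) \<in> carrier G" "b n \<in> carrier G" "a 0 \<in> carrier G"
    "gp G b n \<in> carrier G"
    using Suc.prems by (auto intro: gp_carrier)
  have "gp G (\<lambda>k. a k \<otimes> b k \<otimes> inv (a (Suc k))) (Suc n)
      = (a 0 \<otimes> gp G b n \<otimes> inv (a n)) \<otimes> (a n \<otimes> b n \<otimes> inv (a (Suc n)))"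
    using Suc by simp
  also have "\<dots> = a 0 \<otimes> (gp G b n \<otimes> b n) \<otimes> inv (a (Suc n))"
  proof -
    have "inv (a n) \<otimes> (a n \<otimes> (b n \<otimes> inv (a (Suc n)))) = b n \<otimes> inv (a (Suc n))"
      using ab by (metis l_inv m_assoc l_one inv_closed m_closed)
    then show ?thesis using ab by (simp add: m_assoc)
  qed
  finally show ?case by simp
qed

end

lemma cocycleD:
  assumes "u \<in> cocycle G T Y"
  shows "pathin T p \<Longrightarrow> u p \<in> carrier G"
    and "\<not> pathin T p \<Longrightarrow> u p = \<one>\<^bsub>G\<^esub>"
    and "pathin T p \<Longrightarrow> p ` {0..1} \<subseteq> Y \<Longrightarrow> u p = \<one>\<^bsub>G\<^esub>"
    and "pathin T p \<Longrightarrow> pathin T q \<Longrightarrow> path_homotopic T p q \<Longrightarrow> u p = u q"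
    and "pathin T p \<Longrightarrow> pathin T q \<Longrightarrow> p 1 = q 0 \<Longrightarrow> u (pjoin p q) = u p \<otimes>\<^bsub>G\<^esub> u q"
  using assms by (auto simp: cocycle_def)

lemma path_homotopic_eq:
  assumes "pathin T p" "\<And>t. t \<in> {0..1} \<Longrightarrow> p t = q t"
  shows "path_homotopic T p q"
  unfolding path_homotopic_def
  by (rule homotopic_with_equal) (use assms in \<open>auto simp: pathin_def\<close>)

lemma pathin_eq:
  assumes "pathin T p" "\<And>t. t \<in> {0..1} \<Longrightarrow> p t = q t"
  shows "pathin T q"
  using assms unfolding pathin_def by (metis continuous_map_eq topspace_subtopology_subset
        topspace_euclidean subset_UNIV)

lemma cc_agree:
  assumes "u \<in> cocycle G T Y" "pathin T p" "\<And>t. t \<in> {0..1} \<Longrightarrow> p t = q t"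
  shows "u p = u q"
  using assms by (meson cocycleD(4) path_homotopic_eq pathin_eq)

lemma cc_const:
  assumes "group G" "u \<in> cocycle G T Y" "x \<in> topspace T"
  shows "u (\<lambda>t. x) = \<one>\<^bsub>G\<^esub>"
proof -
  have pj: "pjoin (\<lambda>t. x) (\<lambda>t. x) = (\<lambda>t. x)" by (simp add: pjoin_def)
  have "u (\<lambda>t. x) = u (\<lambda>t. x) \<otimes>\<^bsub>G\<^esub> u (\<lambda>t. x)"
    using cocycleD(5)[OF assms(2), of "\<lambda>t. x" "\<lambda>t. x"] assms(3) by (simp add: pj)
  moreover have "u (\<lambda>t. x) \<in> carrier G" using cocycleD(1)[OF assms(2)] assms(3) by simp
  ultimately show ?thesis using assms(1)
    by (metis group.l_cancel_one' group.is_monoid monoid.r_one group.r_cancel_one)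
qed

lemma cc_split:
  assumes u: "u \<in> cocycle G T Y" and g: "pathin T \<gamma>"
    and abc: "0 \<le> a" "a \<le> b" "b \<le> c" "c \<le> 1"
  shows "u (seg \<gamma> a c) = u (seg \<gamma> a b) \<otimes>\<^bsub>G\<^esub> u (seg \<gamma> b c)"
proof -
  have cv: "convex {0..1::real}" by simp
  have gm: "continuous_map (top_of_set {0..1}) T \<gamma>" using g by (simp add: pathin_def)
  have l1: "pathin (top_of_set {0..1}) (linepath a c)"
    and l2: "pathin (top_of_set {0..1}) (pjoin (linepath a b) (linepath b c))"
    using abc by (auto intro!: pathin_linepath pathin_pjoin)
  have "path_homotopic T (\<gamma> \<circ> linepath a c) (\<gamma> \<circ> pjoin (linepath a b) (linepath b c))"
    by (rule KT[OF cv gm l1 l2]) (auto simp: linepath_def)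
  moreover have "\<gamma> \<circ> pjoin (linepath a b) (linepath b c) = pjoin (seg \<gamma> a b) (seg \<gamma> b c)"
    by (simp add: comp_pjoin seg_def)
  moreover have "pathin T (pjoin (seg \<gamma> a b) (seg \<gamma> b c))"
    using abc g by (intro pathin_pjoin pathin_seg) auto
  ultimately have "u (seg \<gamma> a c) = u (pjoin (seg \<gamma> a b) (seg \<gamma> b c))"
    unfolding seg_def using abc g
    by (intro cocycleD(4)[OF u] pathin_seg[unfolded seg_def]) auto
  also have "\<dots> = u (seg \<gamma> a b) \<otimes>\<^bsub>G\<^esub> u (seg \<gamma> b c)"
    using abc g by (intro cocycleD(5)[OF u] pathin_seg) auto
  finally show ?thesis .
qed

lemma cc_sub:
  assumes G: "group G" and u: "u \<in> cocycle G T Y" and g: "pathin T \<gamma>" and n: "0 < n"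
  shows "u \<gamma> = gp G (\<lambda>k. u (seg \<gamma> (k/n) ((k+1)/n))) n"
proof -
  have "k \<le> n \<Longrightarrow> u (seg \<gamma> 0 (k/n)) = gp G (\<lambda>k. u (seg \<gamma> (k/n) ((k+1)/n))) k" for k
  proof (induction k)
    case 0
    have "seg \<gamma> 0 0 = (\<lambda>t. \<gamma> 0)" by (simp add: seg_def linepath_def fun_eq_iff)
    moreover have "\<gamma> 0 \<in> topspace T" using g by (simp add: path_start_in_topspace)
    ultimately show ?case using cc_const[OF G u] by simp
  next
    case (Suc k)
    have "u (seg \<gamma> 0 (Suc k/n)) = u (seg \<gamma> 0 (k/n)) \<otimes>\<^bsub>G\<^esub> u (seg \<gamma> (k/n) (Suc k/n))"
      using Suc.prems n by (intro cc_split[OF u g]) (auto simp: divide_simps)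
    then show ?case using Suc by (simp add: add.commute)
  qed
  from this[of n] have "u (seg \<gamma> 0 1) = gp G (\<lambda>k. u (seg \<gamma> (k/n) ((k+1)/n))) n" using n by simp
  moreover have "u (seg \<gamma> 0 1) = u \<gamma>"
    using cc_agree[OF u pathin_seg[OF g], of 0 1 \<gamma>] by (simp add: seg_01)
  ultimately show ?thesis by simp
qed



context group
begin

lemma cochainD:
  assumes "group G" "c \<in> cochain0 G T Y"
  shows "c x \<in> carrier G" and "x \<in> Y \<Longrightarrow> c x = \<one>\<^bsub>G\<^esub>" and "x \<notin> topspace T \<Longrightarrow> c x = \<one>\<^bsub>G\<^esub>"
  using assms by (auto simp: cochain0_def group.is_monoid monoid.one_closed)

lemma cochain_one: "group G \<Longrightarrow> (\<lambda>x. \<one>\<^bsub>G\<^esub>) \<in> cochain0 G T Y"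
  by (auto simp: cochain0_def group.is_monoid monoid.one_closed)

lemma cochain_mult: "group G \<Longrightarrow> c \<in> cochain0 G T Y \<Longrightarrow> d \<in> cochain0 G T Y \<Longrightarrow>
    (\<lambda>x. c x \<otimes>\<^bsub>G\<^esub> d x) \<in> cochain0 G T Y"
  by (auto simp: cochain0_def group.is_monoid monoid.one_closed monoid.m_closed monoid.l_one)

lemma cochain_inv: "group G \<Longrightarrow> c \<in> cochain0 G T Y \<Longrightarrow> (\<lambda>x. inv\<^bsub>G\<^esub> c x) \<in> cochain0 G T Y"
  by (auto simp: cochain0_def group.inv_closed monoid.inv_one group.is_monoid)

lemma path_homotopic_ends:
  assumes "path_homotopic T p q" shows "q 0 = p 0" "q 1 = p 1"
  using homotopic_with_imp_property[OF assms[unfolded path_homotopic_def]] by auto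

lemma cact_cocycle:
  assumes G: "group G" and c: "c \<in> cochain0 G T Y" and u: "u \<in> cocycle G T Y"
  shows "cact G T c u \<in> cocycle G T Y"
proof -
  have cc: "c x \<in> carrier G" for x using cochainD(1)[OF G c] .
  show ?thesis
    unfolding cocycle_def mem_Collect_eq
  proof (intro conjI allI impI)
    fix p assume "pathin T p"
    then show "cact G T c u p \<in> carrier G" using cc cocycleD(1)[OF u] by (simp add: cact_def)
  next
    fix p assume "\<not> pathin T p" then show "cact G T c u p = \<one>" by (simp add: cact_def)
  next
    fix p assume p: "pathin T p \<and> p ` {0..1} \<subseteq> Y"
    then have "p 0 \<in> Y" "p 1 \<in> Y" by auto
    then show "cact G T c u p = \<one>"
      using p cochainD(2)[OF G c] cocycleD(3)[OF u] by (simp add: cact_def)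
  next
    fix p q assume pq: "pathin T p \<and> pathin T q \<and> path_homotopic T p q"
    have "u p = u q" using pq cocycleD(4)[OF u] by blast
    then show "cact G T c u p = cact G T c u q"
      using pq path_homotopic_ends[of T p q] by (simp add: cact_def)
  next
    fix p q assume pq: "pathin T p \<and> pathin T q \<and> p 1 = q 0"
    then have pj: "pathin T (pjoin p q)" by (simp add: pathin_pjoin)
    have up: "u p \<in> carrier G" "u q \<in> carrier G" using pq cocycleD(1)[OF u] by auto
    have "cact G T c u (pjoin p q) = c (p 0) \<otimes> (u p \<otimes> u q) \<otimes> inv c (q 1)"
      using pj pq cocycleD(5)[OF u] by (simp add: cact_def)
    also have "\<dots> = (c (p 0) \<otimes> u p \<otimes> inv c (p 1)) \<otimes> (c (q 0) \<otimes> u q \<otimes> inv c (q 1))"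
    proof -
      have "inv c (p 1) \<otimes> (c (p 1) \<otimes> (u q \<otimes> inv c (q 1))) = u q \<otimes> inv c (q 1)"
        using cc up by (metis l_inv m_assoc l_one inv_closed m_closed)
      then show ?thesis using pq cc up by (simp add: m_assoc)
    qed
    finally show "cact G T c u (pjoin p q) = cact G T c u p \<otimes> cact G T c u q"
      using pq by (simp add: cact_def)
  qed
qed

lemma cact_one:
  assumes G: "group G" and u: "u \<in> cocycle G T Y"
  shows "cact G T (\<lambda>x. \<one>\<^bsub>G\<^esub>) u = u"
  using cocycleD(1,2)[OF u] by (auto simp: cact_def fun_eq_iff G group.is_monoid monoid.l_one monoid.r_one monoid.inv_one group.is_monoid)

lemma cact_comp:
  assumes G: "group G" and c: "c \<in> cochain0 G T Y" and d: "d \<in> cochain0 G T Y" and u: "u \<in> cocycle G T Y"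
  shows "cact G T c (cact G T d u) = cact G T (\<lambda>x. c x \<otimes>\<^bsub>G\<^esub> d x) u"
proof -
  have cc: "c x \<in> carrier G" "d x \<in> carrier G" for x
    using cochainD(1)[OF G c] cochainD(1)[OF G d] by auto
  show ?thesis
    unfolding cact_def fun_eq_iff
    using cc cocycleD(1)[OF u] by (auto simp: m_assoc inv_mult_group)
qed

lemma cls_self: "group G \<Longrightarrow> u \<in> cocycle G T Y \<Longrightarrow> u \<in> cls G T Y u"
proof -
  assume G: "group G" and u: "u \<in> cocycle G T Y"
  show ?thesis unfolding cls_def
    using cact_one[OF G u, symmetric] cochain_one[OF G, of T Y] by blast
qed

lemma cls_sub:
  assumes G: "group G" and u: "u \<in> cocycle G T Y" and v: "v \<in> cls G T Y u"
  shows "cls G T Y v \<subseteq> cls G T Y u"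
proof
  fix w assume "w \<in> cls G T Y v"
  then obtain d where d: "d \<in> cochain0 G T Y" "w = cact G T d v" by (auto simp: cls_def)
  obtain c where c: "c \<in> cochain0 G T Y" "v = cact G T c u" using v by (auto simp: cls_def)
  have "w = cact G T (\<lambda>x. d x \<otimes>\<^bsub>G\<^esub> c x) u" using d c cact_comp[OF G d(1) c(1) u] by simp
  then show "w \<in> cls G T Y u" unfolding cls_def using cochain_mult[OF G d(1) c(1)] by blast
qed

lemma cls_sym:
  assumes G: "group G" and u: "u \<in> cocycle G T Y" and v: "v \<in> cls G T Y u"
  shows "u \<in> cls G T Y v"
proof -
  obtain c where c: "c \<in> cochain0 G T Y" "v = cact G T c u" using v by (auto simp: cls_def)
  have cc: "c x \<in> carrier G" for x using cochainD(1)[OF G c(1)] .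
  have "cact G T (\<lambda>x. inv c x) v = cact G T (\<lambda>x. inv c x \<otimes> c x) u"
    using c cact_comp[OF G cochain_inv[OF G c(1)] c(1) u] by simp
  also have "\<dots> = u" using cc cact_one[OF G u] by simp
  finally show ?thesis unfolding cls_def using cochain_inv[OF G c(1)] by blast
qed

lemma cls_cocycle: "group G \<Longrightarrow> u \<in> cocycle G T Y \<Longrightarrow> v \<in> cls G T Y u \<Longrightarrow> v \<in> cocycle G T Y"
  by (auto simp: cls_def intro: cact_cocycle)

lemma cls_eq:
  assumes G: "group G" and u: "u \<in> cocycle G T Y" and v: "v \<in> cls G T Y u"
  shows "cls G T Y v = cls G T Y u"
  using cls_sub[OF G u v] cls_sub[OF G cls_cocycle[OF G u v] cls_sym[OF G u v]] by blast

lemma cls_eqI: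
  assumes G: "group G" and u: "u \<in> cocycle G T Y" and v: "v \<in> cocycle G T Y"
    and e: "cls G T Y u = cls G T Y v"
  shows "\<exists>c \<in> cochain0 G T Y. u = cact G T c v"
  using cls_self[OF G u] e by (auto simp: cls_def)

lemma path_homotopic_sub:
  "path_homotopic (subtopology T S) p q \<Longrightarrow> path_homotopic T p q"
  unfolding path_homotopic_def homotopic_with_def
  using continuous_map_into_fulltopology by blast

lemma restr_cocycle:
  assumes G: "group G" and u: "u \<in> cocycle G T Y"
  shows "restr G T S u \<in> cocycle G (subtopology T S) (Y \<inter> S)"
proof -
  show ?thesis
    unfolding cocycle_def mem_Collect_eq
  proof (intro conjI allI impI)
    fix p assume "pathin (subtopology T S) p"
    then show "restr G T S u p \<in> carrier G"
      using cocycleD(1)[OF u] by (simp add: restr_def pathin_subtopology)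
  next
    fix p assume "\<not> pathin (subtopology T S) p" then show "restr G T S u p = \<one>"
      by (simp add: restr_def)
  next
    fix p assume "pathin (subtopology T S) p \<and> p ` {0..1} \<subseteq> Y \<inter> S"
    then show "restr G T S u p = \<one>"
      using cocycleD(3)[OF u] by (simp add: restr_def pathin_subtopology)
  next
    fix p q assume "pathin (subtopology T S) p \<and> pathin (subtopology T S) q \<and> path_homotopic (subtopology T S) p q"
    then show "restr G T S u p = restr G T S u q"
      using cocycleD(4)[OF u] path_homotopic_sub by (simp add: restr_def pathin_subtopology) blast
  next
    fix p q assume pq: "pathin (subtopology T S) p \<and> pathin (subtopology T S) q \<and> p 1 = q 0"
    then have "pathin (subtopology T S) (pjoin p q)" by (simp add: pathin_pjoin)
    then show "restr G T S u (pjoin p q) = restr G T S u p \<otimes> restr G T S u q"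
      using pq cocycleD(5)[OF u] by (simp add: restr_def pathin_subtopology)
  qed
qed

end

definition cres :: "('g,'b) monoid_scheme \<Rightarrow> 'a topology \<Rightarrow> 'a set \<Rightarrow> ('a \<Rightarrow> 'g) \<Rightarrow> 'a \<Rightarrow> 'g" where
  "cres G T S c = (\<lambda>x. if x \<in> topspace T \<inter> S then c x else \<one>\<^bsub>G\<^esub>)"

context group
begin

lemma cres_cochain:
  "group G \<Longrightarrow> c \<in> cochain0 G T Y \<Longrightarrow> cres G T S c \<in> cochain0 G (subtopology T S) (Y \<inter> S)"
  by (auto simp: cochain0_def cres_def group.is_monoid monoid.one_closed)

lemma restr_cact:
  assumes G: "group G" and c: "c \<in> cochain0 G T Y"
  shows "restr G T S (cact G T c u) = cact G (subtopology T S) (cres G T S c) (restr G T S u)"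
proof -
  have "p 0 \<in> topspace T \<inter> S" "p 1 \<in> topspace T \<inter> S" if "pathin (subtopology T S) p" for p
    using path_start_in_topspace[OF that] path_finish_in_topspace[OF that] by auto
  then show ?thesis
    by (auto simp: restr_def cact_def cres_def fun_eq_iff pathin_subtopology)
qed

lemma rmap_cls:
  assumes G: "group G" and u: "u \<in> cocycle G T Y"
  shows "rmap G T S Y (cls G T Y u) = cls G (subtopology T S) (Y \<inter> S) (restr G T S u)"
proof -
  define v where "v = (SOME v. v \<in> cls G T Y u)"
  have "v \<in> cls G T Y u" unfolding v_def using cls_self[OF G u] by (rule someI[where P="\<lambda>v. v \<in> cls G T Y u"])
  then obtain c where c: "c \<in> cochain0 G T Y" "v = cact G T c u" by (auto simp: cls_def)
  have "restr G T S v = cact G (subtopology T S) (cres G T S c) (restr G T S u)"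
    using c restr_cact[OF G c(1)] by simp
  then have "restr G T S v \<in> cls G (subtopology T S) (Y \<inter> S) (restr G T S u)"
    unfolding cls_def using cres_cochain[OF G c(1)] by blast
  then have "cls G (subtopology T S) (Y \<inter> S) (restr G T S v) = cls G (subtopology T S) (Y \<inter> S) (restr G T S u)"
    by (rule cls_eq[OF G restr_cocycle[OF G u]])
  then show ?thesis unfolding rmap_def v_def by simp
qed

lemma H1_cls: "k \<in> H1 G T Y \<Longrightarrow> \<exists>u \<in> cocycle G T Y. k = cls G T Y u"
  by (auto simp: H1_def)

lemma rmap_H1:
  assumes G: "group G" and k: "k \<in> H1 G T Y"
  shows "rmap G T S Y k \<in> H1 G (subtopology T S) (Y \<inter> S)"
proof -
  obtain u where u: "u \<in> cocycle G T Y" "k = cls G T Y u" using H1_cls[OF k] by blast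
  show ?thesis unfolding u(2) rmap_cls[OF G u(1)] H1_def
    using restr_cocycle[OF G u(1)] by blast
qed

end



definition piece :: "(real \<Rightarrow> 'a) \<Rightarrow> nat \<Rightarrow> nat \<Rightarrow> real \<Rightarrow> 'a" where
  "piece \<gamma> n k = seg \<gamma> (real k / real n) (real (Suc k) / real n)"

lemma cc_sub':
  assumes G: "group G" and u: "u \<in> cocycle G T Y" and g: "pathin T \<gamma>" and n: "0 < n"
  shows "u \<gamma> = gp G (\<lambda>k. u (piece \<gamma> n k)) n"
  using cc_sub[OF G u g n] by (simp add: piece_def add.commute)

lemma pathin_piece: "pathin T \<gamma> \<Longrightarrow> k < n \<Longrightarrow> pathin T (piece \<gamma> n k)"
  unfolding piece_def by (rule pathin_seg) (auto simp: divide_simps)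

lemma piece_piece:
  assumes "0 < n" "0 < m"
  shows "piece (piece \<gamma> n k) m i = piece \<gamma> (n * m) (k * m + i)"
proof -
  have e: "(1 - real j / real m) * (real k / real n) + real j / real m * (real (Suc k) / real n)
        = real (k * m + j) / real (n * m)" for j
    using assms by (simp add: field_simps)
  show ?thesis unfolding piece_def seg_seg e
    using e[of "Suc i"] by simp
qed

lemma leb:
  fixes S :: "'m::metric_space set"
  assumes S: "compact S" and f: "continuous_map (top_of_set S) X f"
    and oU: "openin X U" and oV: "openin X V" and cov: "topspace X \<subseteq> U \<union> V"
  obtains \<delta> where "0 < \<delta>" "\<And>T. T \<subseteq> S \<Longrightarrow> diameter T < \<delta> \<Longrightarrow> f ` T \<subseteq> U \<or> f ` T \<subseteq> V"
proof -
  have "openin (top_of_set S) {x \<in> S. f x \<in> U}" "openin (top_of_set S) {x \<in> S. f x \<in> V}"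
    using openin_continuous_map_preimage[OF f oU] openin_continuous_map_preimage[OF f oV] by auto
  then obtain O1 O2 where O: "open O1" "{x \<in> S. f x \<in> U} = S \<inter> O1" "open O2" "{x \<in> S. f x \<in> V} = S \<inter> O2"
    unfolding openin_open by metis
  have fS: "f x \<in> topspace X" if "x \<in> S" for x
    using continuous_map_image_subset_topspace[OF f] that by auto
  have "S \<subseteq> \<Union>{O1, O2}"
  proof
    fix x assume "x \<in> S"
    then have "f x \<in> U \<or> f x \<in> V" using fS cov by auto
    then show "x \<in> \<Union>{O1, O2}" using O \<open>x \<in> S\<close> by blast
  qed
  then obtain \<delta> where d: "0 < \<delta>" "\<And>T. T \<subseteq> S \<Longrightarrow> diameter T < \<delta> \<Longrightarrow> \<exists>B \<in> {O1, O2}. T \<subseteq> B"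
    using Lebesgue_number_lemma[OF S, of "{O1, O2}"] O by auto
  show ?thesis
  proof (rule that[OF d(1)])
    fix T assume "T \<subseteq> S" "diameter T < \<delta>"
    then have "T \<subseteq> O1 \<or> T \<subseteq> O2" using d(2) by auto
    then show "f ` T \<subseteq> U \<or> f ` T \<subseteq> V" using O \<open>T \<subseteq> S\<close> by blast
  qed
qed

lemma lp_pair: "linepath (a, b) (c, d) t = (linepath a c t, linepath b d t)"
  by (simp add: linepath_def)

lemma lp_same: "linepath a a t = a"
  by (simp add: linepath_def algebra_simps flip: scaleR_add_left)

lemma lp_in: "a \<le> b \<Longrightarrow> t \<in> {0..1} \<Longrightarrow> linepath a b t \<in> {a..(b::real)}"
  using linepath_image_01[of a b] closed_segment_eq_real_ivl[of a b] by auto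

lemma cell_square:
  fixes H :: "real \<times> real \<Rightarrow> 'a"
  assumes G: "group G" and z: "z \<in> cocycle G T Y"
    and H: "continuous_map (top_of_set ({s0..s1}\<times>{t0..t1})) T H" and st: "s0 \<le> s1" "t0 \<le> t1"
  shows "z (H \<circ> linepath (s0,t0) (s0,t1)) \<otimes>\<^bsub>G\<^esub> z (H \<circ> linepath (s0,t1) (s1,t1))
       = z (H \<circ> linepath (s0,t0) (s1,t0)) \<otimes>\<^bsub>G\<^esub> z (H \<circ> linepath (s1,t0) (s1,t1))"
proof -
  let ?C = "{s0..s1}\<times>{t0..t1}"
  have cv: "convex ?C" by (simp add: convex_Times)
  have lp: "pathin (top_of_set ?C) (linepath a b)" if "a \<in> ?C" "b \<in> ?C" for a b
    using pathin_linepath[OF cv that] .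
  have c: "(s0,t0) \<in> ?C" "(s0,t1) \<in> ?C" "(s1,t0) \<in> ?C" "(s1,t1) \<in> ?C" using st by auto
  have pa: "pathin (top_of_set ?C) (pjoin (linepath (s0,t0) (s0,t1)) (linepath (s0,t1) (s1,t1)))"
    and pb: "pathin (top_of_set ?C) (pjoin (linepath (s0,t0) (s1,t0)) (linepath (s1,t0) (s1,t1)))"
    using c by (auto intro!: pathin_pjoin lp)
  have hom: "path_homotopic T (H \<circ> pjoin (linepath (s0,t0) (s0,t1)) (linepath (s0,t1) (s1,t1)))
                          (H \<circ> pjoin (linepath (s0,t0) (s1,t0)) (linepath (s1,t0) (s1,t1)))"
    by (rule KT[OF cv H pa pb]) auto
  have pH: "pathin T (H \<circ> linepath a b)" if "a \<in> ?C" "b \<in> ?C" for a b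
    using pathin_compose[OF lp[OF that] H] .
  have "z (H \<circ> pjoin (linepath (s0,t0) (s0,t1)) (linepath (s0,t1) (s1,t1)))
      = z (H \<circ> pjoin (linepath (s0,t0) (s1,t0)) (linepath (s1,t0) (s1,t1)))"
    using cocycleD(4)[OF z _ _ hom] pathin_compose[OF pa H] pathin_compose[OF pb H] by blast
  then show ?thesis
    unfolding comp_pjoin using c pH by (simp add: cocycleD(5)[OF z])
qed

locale cover = group G for G :: "('g,'b) monoid_scheme" +
  fixes X :: "'p topology" and U V :: "'p set"
  assumes oU: "openin X U" and oV: "openin X V" and cov: "topspace X = U \<union> V"
begin

definition inUV :: "(real \<Rightarrow> 'p) \<Rightarrow> bool" where
  "inUV \<sigma> \<longleftrightarrow> pathin (subtopology X U) \<sigma> \<or> pathin (subtopology X V) \<sigma>"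

definition good :: "(real \<Rightarrow> 'p) \<Rightarrow> nat \<Rightarrow> bool" where
  "good \<gamma> n \<longleftrightarrow> 0 < n \<and> (\<forall>k<n. inUV (piece \<gamma> n k))"

lemma inUV_pathin: "inUV \<sigma> \<Longrightarrow> pathin X \<sigma>"
  by (auto simp: inUV_def pathin_subtopology)

lemma inUV_eq: "inUV \<sigma> \<Longrightarrow> (\<And>t. t \<in> {0..1} \<Longrightarrow> \<sigma> t = \<sigma>' t) \<Longrightarrow> inUV \<sigma>'"
  unfolding inUV_def using pathin_eq by metis

lemma good_exists:
  assumes g: "pathin X \<gamma>"
  shows "\<exists>n. good \<gamma> n"
proof -
  have gm: "continuous_map (top_of_set {0..1}) X \<gamma>" using g by (simp add: pathin_def)
  obtain \<delta> where d: "0 < \<delta>" "\<And>T. T \<subseteq> {0..1} \<Longrightarrow> diameter T < \<delta> \<Longrightarrow> \<gamma> ` T \<subseteq> U \<or> \<gamma> ` T \<subseteq> V"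
    using leb[OF compact_Icc gm oU oV] cov by auto
  obtain n :: nat where n: "1 / \<delta> < n" using reals_Archimedean2 by blast
  have n0: "0 < n" using n d(1) by (metis of_nat_0_less_iff less_trans zero_less_divide_1_iff)
  have "1 / real n < \<delta>" using n d(1) n0 by (simp add: field_simps)
  have "inUV (piece \<gamma> n k)" if k: "k < n" for k
  proof -
    let ?T = "{real k / real n .. real (Suc k) / real n}"
    have sub: "?T \<subseteq> {0..1}" using k n0 by (auto simp: field_simps)
    have "diameter ?T = 1 / real n" using n0 by (simp add: field_simps diff_divide_distrib)
    then have "\<gamma> ` ?T \<subseteq> U \<or> \<gamma> ` ?T \<subseteq> V" using d(2)[OF sub] \<open>1 / real n < \<delta>\<close> by simp
    moreover have "piece \<gamma> n k ` {0..1} = \<gamma> ` ?T"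
      unfolding piece_def using n0 by (intro seg_image) (simp add: divide_right_mono)
    moreover have "pathin X (piece \<gamma> n k)" using pathin_piece[OF g k] .
    ultimately show ?thesis unfolding inUV_def pathin_subtopology by blast
  qed
  then show ?thesis using n0 unfolding good_def by blast
qed

lemma good_mult_pieces:
  assumes "good \<gamma> n" "0 < m" "k < n" "i < m"
  shows "pathin (subtopology X U) (piece \<gamma> n k) \<Longrightarrow> pathin (subtopology X U) (piece \<gamma> (n * m) (k * m + i))"
    and "pathin (subtopology X V) (piece \<gamma> n k) \<Longrightarrow> pathin (subtopology X V) (piece \<gamma> (n * m) (k * m + i))"
  using assms pathin_piece[of _ "piece \<gamma> n k" i m] piece_piece[of n m \<gamma> k i]
  by (auto simp: good_def)

lemma good_mult:
  assumes g: "good \<gamma> n" and m: "0 < m"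
  shows "good \<gamma> (n * m)"
proof -
  have "inUV (piece \<gamma> (n * m) j)" if j: "j < n * m" for j
  proof -
    have jj: "j = (j div m) * m + j mod m" by simp
    have "j div m < n" using j m by (simp add: less_mult_imp_div_less)
    moreover have "j mod m < m" using m by simp
    ultimately show ?thesis
      using good_mult_pieces[OF g m, of "j div m" "j mod m"] g jj unfolding good_def inUV_def
      by metis
  qed
  then show ?thesis using g m by (simp add: good_def)
qed

end



lemma piece_pjoin1:
  assumes k: "k < n" and t: "t \<in> {0..1}"
  shows "piece (pjoin \<gamma> \<delta>) (2 * n) k t = piece \<gamma> n k t"
proof -
  have n: "0 < n" using k by simp
  have e1: "(1 - t) * (real k / real (2 * n)) + t * (real (Suc k) / real (2 * n)) = (real k + t) / (2 * real n)"
    using n by (simp add: field_simps)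
  have e2: "(1 - t) * (real k / real n) + t * (real (Suc k) / real n) = (real k + t) / real n"
    using n by (simp add: field_simps)
  have "real k + 1 \<le> real n" using k by linarith
  then have le: "(real k + t) / (2 * real n) \<le> 1/2" using t n by (simp add: field_simps)
  have "2 * ((real k + t) / (2 * real n)) = (real k + t) / real n" using n by (simp add: field_simps)
  then show ?thesis
    unfolding piece_def seg_def linepath_def pjoin_def o_def
    using le by (simp only: real_scaleR_def e1 e2) simp
qed

lemma piece_pjoin2:
  assumes i: "i < n" and t: "t \<in> {0..1}" and e: "\<gamma> 1 = \<delta> 0"
  shows "piece (pjoin \<gamma> \<delta>) (2 * n) (n + i) t = piece \<delta> n i t"
proof -
  have n: "0 < n" using i by simp
  have e1: "(1 - t) * (real (n + i) / real (2 * n)) + t * (real (Suc (n + i)) / real (2 * n))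
      = (real n + real i + t) / (2 * real n)"
    using n by (simp add: field_simps)
  have e2: "(1 - t) * (real i / real n) + t * (real (Suc i) / real n) = (real i + t) / real n"
    using n by (simp add: field_simps)
  have e3: "2 * ((real n + real i + t) / (2 * real n)) - 1 = (real i + t) / real n"
    using n by (simp add: field_simps)
  show ?thesis
  proof (cases "real i + t = 0")
    case True
    then have "i = 0" "t = 0" using t by auto
    then show ?thesis using n e
      unfolding piece_def seg_def linepath_def pjoin_def o_def by simp
  next
    case False
    then have "real i + t > 0" using t by simp
    then have "\<not> (real n + real i + t) / (2 * real n) \<le> 1/2" using n by (simp add: field_simps)
    then show ?thesis
      unfolding piece_def seg_def linepath_def pjoin_def o_def
      by (simp only: real_scaleR_def e1 e2 e3 if_False)
  qed
qed

locale glue = cover G X U V for G :: "('g,'b) monoid_scheme" (structure) and X :: "'p topology" and U V +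
  fixes u v :: "(real \<Rightarrow> 'p) \<Rightarrow> 'g" and YU YV :: "'p set"
  assumes u: "u \<in> cocycle G (subtopology X U) YU" and v: "v \<in> cocycle G (subtopology X V) YV"
    and agree: "\<And>\<sigma>. pathin (subtopology X (U \<inter> V)) \<sigma> \<Longrightarrow> u \<sigma> = v \<sigma>"
begin

definition fU :: "(real \<Rightarrow> 'p) \<Rightarrow> 'g" where
  "fU \<sigma> = (if pathin (subtopology X U) \<sigma> then u \<sigma> else v \<sigma>)"

definition Wn :: "(real \<Rightarrow> 'p) \<Rightarrow> nat \<Rightarrow> 'g" where
  "Wn \<gamma> n = gp G (\<lambda>k. fU (piece \<gamma> n k)) n"

definition glu :: "(real \<Rightarrow> 'p) \<Rightarrow> 'g" where
  "glu \<gamma> = (if pathin X \<gamma> then Wn \<gamma> (SOME n. good \<gamma> n) else \<one>)"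

lemma fU_U: "pathin (subtopology X U) \<sigma> \<Longrightarrow> fU \<sigma> = u \<sigma>"
  by (simp add: fU_def)

lemma fU_V: "pathin (subtopology X V) \<sigma> \<Longrightarrow> fU \<sigma> = v \<sigma>"
  using agree by (auto simp: fU_def pathin_subtopology)

lemma fU_carrier: "inUV \<sigma> \<Longrightarrow> fU \<sigma> \<in> carrier G"
  unfolding inUV_def using fU_U fU_V cocycleD(1)[OF u] cocycleD(1)[OF v] by metis

lemma fU_eq: "inUV \<sigma> \<Longrightarrow> (\<And>t. t \<in> {0..1} \<Longrightarrow> \<sigma> t = \<sigma>' t) \<Longrightarrow> fU \<sigma> = fU \<sigma>'"
  unfolding inUV_def using fU_U fU_V cc_agree[OF u] cc_agree[OF v] pathin_eq by metis

lemma fU_const: "x \<in> topspace X \<Longrightarrow> fU (\<lambda>t. x) = \<one>"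
  using cov fU_U fU_V cc_const[OF is_group u] cc_const[OF is_group v]
  by (auto simp: pathin_subtopology)

lemma Wn_carrier: "good \<gamma> n \<Longrightarrow> Wn \<gamma> n \<in> carrier G"
  unfolding Wn_def good_def by (intro gp_carrier fU_carrier) auto

lemma Wn_mult:
  assumes g: "good \<gamma> n" and m: "0 < m"
  shows "Wn \<gamma> (n * m) = Wn \<gamma> n"
proof -
  have gm: "good \<gamma> (n * m)" using good_mult[OF g m] .
  have "Wn \<gamma> (n * m) = gp G (\<lambda>k. gp G (\<lambda>i. fU (piece \<gamma> (n * m) (k * m + i))) m) n"
    unfolding Wn_def using gm by (intro gp_mult fU_carrier) (auto simp: good_def)
  also have "\<dots> = gp G (\<lambda>k. fU (piece \<gamma> n k)) n"
  proof (rule gp_cong)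
    fix k assume k: "k < n"
    have n0: "0 < n" using g by (simp add: good_def)
    have "inUV (piece \<gamma> n k)" using g k by (simp add: good_def)
    then consider "pathin (subtopology X U) (piece \<gamma> n k)" | "pathin (subtopology X V) (piece \<gamma> n k)"
      unfolding inUV_def by blast
    then show "gp G (\<lambda>i. fU (piece \<gamma> (n * m) (k * m + i))) m = fU (piece \<gamma> n k)"
    proof cases
      case 1
      have "fU (piece \<gamma> n k) = gp G (\<lambda>i. u (piece (piece \<gamma> n k) m i)) m"
        using fU_U[OF 1] cc_sub'[OF is_group u 1 m] by simp
      also have "\<dots> = gp G (\<lambda>i. fU (piece \<gamma> (n * m) (k * m + i))) m"
      proof (rule gp_cong)
        fix i assume i: "i < m"
        show "u (piece (piece \<gamma> n k) m i) = fU (piece \<gamma> (n * m) (k * m + i))"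
          unfolding piece_piece[OF n0 m] by (rule fU_U[OF good_mult_pieces(1)[OF g m k i 1], symmetric])
      qed
      finally show ?thesis by simp
    next
      case 2
      have "fU (piece \<gamma> n k) = gp G (\<lambda>i. v (piece (piece \<gamma> n k) m i)) m"
        using fU_V[OF 2] cc_sub'[OF is_group v 2 m] by simp
      also have "\<dots> = gp G (\<lambda>i. fU (piece \<gamma> (n * m) (k * m + i))) m"
      proof (rule gp_cong)
        fix i assume i: "i < m"
        show "v (piece (piece \<gamma> n k) m i) = fU (piece \<gamma> (n * m) (k * m + i))"
          unfolding piece_piece[OF n0 m] by (rule fU_V[OF good_mult_pieces(2)[OF g m k i 2], symmetric])
      qed
      finally show ?thesis by simp
    qed
  qed
  finally show ?thesis by (simp add: Wn_def)
qed

lemma Wn_indep: "good \<gamma> n \<Longrightarrow> good \<gamma> n' \<Longrightarrow> Wn \<gamma> n = Wn \<gamma> n'"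
  using Wn_mult[of \<gamma> n n'] Wn_mult[of \<gamma> n' n] by (auto simp: good_def mult.commute)

lemma glu_eq: "pathin X \<gamma> \<Longrightarrow> good \<gamma> n \<Longrightarrow> glu \<gamma> = Wn \<gamma> n"
  unfolding glu_def using good_exists Wn_indep someI_ex[of "good \<gamma>"] by metis

lemma glu_carrier: "glu \<gamma> \<in> carrier G"
  using glu_eq good_exists Wn_carrier by (metis glu_def one_closed)

lemma glu_UV:
  assumes "inUV \<gamma>"
  shows "glu \<gamma> = fU \<gamma>"
proof -
  have a: "\<gamma> t = piece \<gamma> 1 0 t" if "t \<in> {0..1}" for t
    using that by (simp add: piece_def seg_01)
  then have g1: "good \<gamma> 1" using inUV_eq[OF assms] by (simp add: good_def)
  have "glu \<gamma> = Wn \<gamma> 1" using glu_eq[OF inUV_pathin[OF assms] g1] .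
  also have "\<dots> = fU (piece \<gamma> 1 0)" using fU_carrier g1 by (simp add: Wn_def good_def)
  also have "\<dots> = fU \<gamma>" using fU_eq[OF assms a] by simp
  finally show ?thesis .
qed

lemma glu_U: "pathin (subtopology X U) \<gamma> \<Longrightarrow> glu \<gamma> = u \<gamma>"
  using glu_UV fU_U by (simp add: inUV_def)

lemma glu_V: "pathin (subtopology X V) \<gamma> \<Longrightarrow> glu \<gamma> = v \<gamma>"
  using glu_UV fU_V by (simp add: inUV_def)

lemma glu_join:
  assumes g: "pathin X \<gamma>" and d: "pathin X \<delta>" and e: "\<gamma> 1 = \<delta> 0"
  shows "glu (pjoin \<gamma> \<delta>) = glu \<gamma> \<otimes> glu \<delta>"
proof -
  obtain n1 n2 where n1: "good \<gamma> n1" and n2: "good \<delta> n2" using good_exists g d by blast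
  define n where "n = n1 * n2"
  have gn: "good \<gamma> n" unfolding n_def by (rule good_mult[OF n1]) (use n2 in \<open>simp add: good_def\<close>)
  have "good \<delta> (n2 * n1)" by (rule good_mult[OF n2]) (use n1 in \<open>simp add: good_def\<close>)
  then have dn: "good \<delta> n" by (simp add: n_def mult.commute)
  have a1: "piece \<gamma> n k t = piece (pjoin \<gamma> \<delta>) (2 * n) k t" if "k < n" "t \<in> {0..1}" for k t
    using piece_pjoin1[OF that, of \<gamma> \<delta>] by simp
  have a2: "piece \<delta> n i t = piece (pjoin \<gamma> \<delta>) (2 * n) (n + i) t" if "i < n" "t \<in> {0..1}" for i t
    using piece_pjoin2[of i n t \<gamma> \<delta>] that e by simp
  have "inUV (piece (pjoin \<gamma> \<delta>) (2 * n) j)" if j: "j < 2 * n" for j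
  proof (cases "j < n")
    case True
    then show ?thesis using inUV_eq[of "piece \<gamma> n j"] gn a1 by (simp add: good_def)
  next
    case False
    then obtain i where i: "j = n + i" "i < n" using j by (metis add_diff_inverse_nat mult_2 nat_add_left_cancel_less)
    then show ?thesis using inUV_eq[of "piece \<delta> n i"] dn a2 by (simp add: good_def)
  qed
  then have gj: "good (pjoin \<gamma> \<delta>) (2 * n)" using gn by (simp add: good_def)
  define f where "f = (\<lambda>k. fU (piece (pjoin \<gamma> \<delta>) (2 * n) k))"
  have "glu (pjoin \<gamma> \<delta>) = Wn (pjoin \<gamma> \<delta>) (2 * n)"
    using glu_eq[OF pathin_pjoin[OF g d e] gj] .
  also have "\<dots> = gp G f (n + n)" by (simp only: Wn_def f_def mult_2)
  also have "\<dots> = gp G f n \<otimes> gp G (\<lambda>i. f (n + i)) n"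
    using gj unfolding f_def by (intro gp_add fU_carrier) (auto simp: good_def mult_2)
  also have "gp G f n = Wn \<gamma> n"
    unfolding Wn_def f_def using gn a1 fU_eq by (intro gp_cong) (simp add: good_def)
  also have "gp G (\<lambda>i. f (n + i)) n = Wn \<delta> n"
    unfolding Wn_def f_def using dn a2 fU_eq by (intro gp_cong) (simp add: good_def)
  finally show ?thesis using glu_eq[OF g gn] glu_eq[OF d dn] by simp
qed

end



context glue
begin

lemma glu_hom:
  assumes p: "pathin X p" and q: "pathin X q" and hpq: "path_homotopic X p q"
  shows "glu p = glu q"
proof -
  obtain h :: "real \<times> real \<Rightarrow> 'p" where H: "continuous_map (prod_topology (top_of_set {0..1}) (top_of_set {0..1})) X h
      \<and> (\<forall>x. h (0,x) = p x) \<and> (\<forall>x. h (1,x) = q x) \<and> (\<forall>t\<in>{0..1}. h (t,0) = p 0 \<and> h (t,1) = p 1)"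
    using hpq unfolding path_homotopic_def homotopic_with_def by auto
  have hc0: "continuous_map (prod_topology (top_of_set {0..1}) (top_of_set {0..1})) X h"
    and h0: "\<And>x. h (0,x) = p x" and h1: "\<And>x. h (1,x) = q x"
    and hP: "\<And>s. s \<in> {0..1} \<Longrightarrow> h (s,0) = p 0 \<and> h (s,1) = p 1"
    using H by auto
  have hc: "continuous_map (top_of_set ({0..1}\<times>{0..1})) X h" using hc0 by simp
  obtain \<delta> where d: "0 < \<delta>" "\<And>T. T \<subseteq> {0..1}\<times>{0..1} \<Longrightarrow> diameter T < \<delta> \<Longrightarrow> h ` T \<subseteq> U \<or> h ` T \<subseteq> V"
    using leb[OF compact_Times[OF compact_Icc compact_Icc] hc oU oV] cov by auto
  obtain n :: nat where n: "2 / \<delta> < n" using reals_Archimedean2 by blast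
  have n0: "0 < n" using n d(1) by (metis of_nat_0_less_iff less_trans zero_less_divide_iff zero_less_numeral)
  have nd: "2 / real n < \<delta>" using n d(1) n0 by (simp add: field_simps)
  define cell where "cell j k = {real j/real n .. real (Suc j)/real n} \<times> {real k/real n .. real (Suc k)/real n}" for j k
  have ord: "real j / real n \<le> real (Suc j) / real n" for j
    using n0 by (simp add: divide_right_mono)
  have b01: "0 \<le> real j / real n" "j < n \<Longrightarrow> real (Suc j) / real n \<le> 1" for j
    using n0 by (auto simp: field_simps)
  have cell_sub: "cell j k \<subseteq> {0..1}\<times>{0..1}" if "j < n" "k < n" for j k
  proof -
    have "{real j/real n .. real (Suc j)/real n} \<subseteq> {0..1}" "{real k/real n .. real (Suc k)/real n} \<subseteq> {0..1}"
      using b01[of j] b01[of k] that by auto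
    then show ?thesis unfolding cell_def by blast
  qed
  have diam: "diameter (cell j k) < \<delta>" for j k
  proof -
    have w: "\<bar>x - y\<bar> \<le> 1 / real n" if "x \<in> {real i/real n .. real (Suc i)/real n}" "y \<in> {real i/real n .. real (Suc i)/real n}" for x y i
    proof -
      have "real (Suc i) / real n - real i / real n = 1 / real n" using n0 by (simp add: field_simps)
      then show ?thesis using that by auto
    qed
    have "norm (x - y) \<le> 2 / real n" if "x \<in> cell j k" "y \<in> cell j k" for x y
    proof -
      have "norm (x - y) \<le> norm (fst x - fst y) + norm (snd x - snd y)"
      proof -
        have "x - y = (fst x - fst y, snd x - snd y)" by (simp add: prod_eq_iff)
        then show ?thesis using norm_Pair_le[of "fst x - fst y" "snd x - snd y"] by simp
      qed
      also have "\<dots> \<le> 1 / real n + 1 / real n"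
        using w[where x="fst x" and y="fst y" and i=j] w[where x="snd x" and y="snd y" and i=k] that unfolding cell_def
        by (intro add_mono) (auto simp: mem_Times_iff)
      finally show ?thesis by simp
    qed
    then have "diameter (cell j k) \<le> 2 / real n" by (intro diameter_le) auto
    then show ?thesis using nd by linarith
  qed
  have cellW: "h ` cell j k \<subseteq> U \<or> h ` cell j k \<subseteq> V" if "j < n" "k < n" for j k
    using d(2)[OF cell_sub[OF that] diam] .
  have hcell: "continuous_map (top_of_set (cell j k)) X h" if "j < n" "k < n" for j k
  proof -
    have "continuous_map (subtopology (top_of_set ({0..1}\<times>{0..1})) (cell j k)) X h"
      by (rule continuous_map_from_subtopology[OF hc])
    then show ?thesis by (simp add: subtopology_subtopology Int_absorb1[OF cell_sub[OF that]])
  qed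
  have hcellW: "continuous_map (top_of_set (cell j k)) (subtopology X W) h"
    if "j < n" "k < n" "h ` cell j k \<subseteq> W" for j k W
    using hcell[OF that(1,2)] that(3) by (auto simp: continuous_map_in_subtopology)
  have inUVc: "inUV (h \<circ> linepath a b)" if "j < n" "k < n" "a \<in> cell j k" "b \<in> cell j k" for j k a b
  proof -
    have cv: "convex (cell j k)" unfolding cell_def by (simp add: convex_Times)
    have lp: "pathin (top_of_set (cell j k)) (linepath a b)" by (rule pathin_linepath[OF cv that(3,4)])
    show ?thesis using cellW[OF that(1,2)] pathin_compose[OF lp hcellW[OF that(1,2)]]
      unfolding inUV_def by blast
  qed
  define B where "B j k = h \<circ> linepath (real j/real n, real k/real n) (real j/real n, real (Suc k)/real n)" for j k
  define Vt where "Vt j k = h \<circ> linepath (real j/real n, real k/real n) (real (Suc j)/real n, real k/real n)" for j k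
  have corners: "(real j/real n, real k/real n) \<in> cell j k" "(real j/real n, real (Suc k)/real n) \<in> cell j k"
    "(real (Suc j)/real n, real k/real n) \<in> cell j k" "(real (Suc j)/real n, real (Suc k)/real n) \<in> cell j k" for j k
    unfolding cell_def using ord[of j] ord[of k] by auto
  have inB1: "inUV (B j k)" "inUV (B (Suc j) k)" "inUV (Vt j k)" "inUV (Vt j (Suc k))" if "j < n" "k < n" for j k
    unfolding B_def Vt_def using inUVc[OF that] corners by auto
  have cellEq: "fU (B j k) \<otimes> fU (Vt j (Suc k)) = fU (Vt j k) \<otimes> fU (B (Suc j) k)" if jk: "j < n" "k < n" for j k
  proof -
    have gen: "fU (B j k) \<otimes> fU (Vt j (Suc k)) = fU (Vt j k) \<otimes> fU (B (Suc j) k)"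
      if z: "z \<in> cocycle G (subtopology X W) YW" and zf: "\<And>\<sigma>. pathin (subtopology X W) \<sigma> \<Longrightarrow> fU \<sigma> = z \<sigma>"
        and hW: "h ` cell j k \<subseteq> W" for W z YW
    proof -
      have hm: "continuous_map (top_of_set (cell j k)) (subtopology X W) h" by (rule hcellW[OF jk hW])
      have cv: "convex (cell j k)" unfolding cell_def by (simp add: convex_Times)
      have pW: "pathin (subtopology X W) (h \<circ> linepath a b)" if "a \<in> cell j k" "b \<in> cell j k" for a b
        using pathin_compose[OF pathin_linepath[OF cv that] hm] .
      have "z (B j k) \<otimes> z (Vt j (Suc k)) = z (Vt j k) \<otimes> z (B (Suc j) k)"
        unfolding B_def Vt_def
        by (rule cell_square[OF is_group z hm[unfolded cell_def] ord ord])
      moreover have "fU (B j k) = z (B j k)" "fU (Vt j (Suc k)) = z (Vt j (Suc k))"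
        "fU (Vt j k) = z (Vt j k)" "fU (B (Suc j) k) = z (B (Suc j) k)"
        unfolding B_def Vt_def using zf pW corners by auto
      ultimately show ?thesis by simp
    qed
    show ?thesis using cellW[OF jk]
    proof
      assume "h ` cell j k \<subseteq> U" then show ?thesis using gen[of u U YU] u fU_U by blast
    next
      assume "h ` cell j k \<subseteq> V" then show ?thesis using gen[of v V YV] v fU_V by blast
    qed
  qed
  have inVt: "inUV (Vt j k)" if "j < n" "k \<le> n" for j k
  proof (cases k)
    case 0 then show ?thesis using inB1(3)[OF that(1)] n0 by simp
  next
    case (Suc k') then show ?thesis using inB1(4)[OF that(1), of k'] that by simp
  qed
  have pt: "p 0 \<in> topspace X" "p 1 \<in> topspace X"
    using p by (auto simp: path_start_in_topspace path_finish_in_topspace)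
  have lpin: "linepath (real j / real n) (real (Suc j) / real n) t \<in> {0..1}" if "j < n" "t \<in> {0..1}" for j t
  proof -
    have a: "real j / real n \<le> linepath (real j / real n) (real (Suc j) / real n) t"
      "linepath (real j / real n) (real (Suc j) / real n) t \<le> real (Suc j) / real n"
      using lp_in[OF ord[of j] that(2)] by auto
    have b: "0 \<le> real j / real n" "real (Suc j) / real n \<le> 1" using b01(1) b01(2)[OF that(1)] by auto
    from a b show ?thesis by (simp only: atLeastAtMost_iff) linarith
  qed
  have V0: "fU (Vt j 0) = \<one>" if "j < n" for j
  proof -
    have iv: "inUV (Vt j 0)" using inVt[OF that, of 0] by simp
    have "fU (Vt j 0) = fU (\<lambda>t. p 0)"
    proof (rule fU_eq[OF iv])
      fix t :: real assume "t \<in> {0..1}"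
      then show "Vt j 0 t = p 0" using lpin[OF that] hP by (simp add: Vt_def lp_pair lp_same)
    qed
    then show ?thesis using fU_const pt by simp
  qed
  have Vn: "fU (Vt j n) = \<one>" if "j < n" for j
  proof -
    have iv: "inUV (Vt j n)" using inVt[OF that, of n] by simp
    have "fU (Vt j n) = fU (\<lambda>t. p 1)"
    proof (rule fU_eq[OF iv])
      fix t :: real assume "t \<in> {0..1}"
      then show "Vt j n t = p 1" using lpin[OF that] hP n0 by (simp add: Vt_def lp_pair lp_same)
    qed
    then show ?thesis using fU_const pt by simp
  qed
  have step: "gp G (\<lambda>k. fU (B j k)) n = gp G (\<lambda>k. fU (B (Suc j) k)) n" if j: "j < n" for j
  proof -
    have "fU (B j k) = fU (Vt j k) \<otimes> fU (B (Suc j) k) \<otimes> inv (fU (Vt j (Suc k)))" if k: "k < n" for k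
    proof -
      have c: "fU (B j k) \<in> carrier G" "fU (Vt j (Suc k)) \<in> carrier G" "fU (Vt j k) \<in> carrier G"
        "fU (B (Suc j) k) \<in> carrier G"
        using inB1[OF j k] by (auto intro: fU_carrier)
      have "fU (B j k) = fU (B j k) \<otimes> fU (Vt j (Suc k)) \<otimes> inv (fU (Vt j (Suc k)))"
        using c by (simp add: m_assoc)
      then show ?thesis using cellEq[OF j k] by simp
    qed
    then have "gp G (\<lambda>k. fU (B j k)) n = gp G (\<lambda>k. fU (Vt j k) \<otimes> fU (B (Suc j) k) \<otimes> inv (fU (Vt j (Suc k)))) n"
      by (intro gp_cong) simp
    also have "\<dots> = fU (Vt j 0) \<otimes> gp G (\<lambda>k. fU (B (Suc j) k)) n \<otimes> inv (fU (Vt j n))"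
      using inVt[OF j] inB1[OF j] by (intro gp_tele fU_carrier) auto
    also have "\<dots> = gp G (\<lambda>k. fU (B (Suc j) k)) n"
      using V0[OF j] Vn[OF j] inB1[OF j] by (simp add: gp_carrier fU_carrier)
    finally show ?thesis .
  qed
  define row where "row j = (\<lambda>t. h (real j / real n, t))" for j
  have prow: "piece (row j) n k = B j k" for j k
    by (auto simp: row_def B_def piece_def seg_def lp_pair lp_same fun_eq_iff)
  have Wrow: "Wn (row j) n = gp G (\<lambda>k. fU (B j k)) n" for j
    by (simp add: Wn_def prow)
  have inB: "inUV (B j k)" if "j \<le> n" "k < n" for j k
  proof (cases "j < n")
    case True then show ?thesis using inB1(1) that by blast
  next
    case False
    then have "j = Suc (n - 1)" "n - 1 < n" using that n0 by auto
    then show ?thesis using inB1(2)[of "n - 1" k] that by simp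
  qed
  have grow: "good (row j) n" if "j \<le> n" for j
    using inB[OF that] n0 by (simp add: good_def prow)
  have "Wn (row j) n = Wn (row 0) n" if "j \<le> n" for j
    using that
  proof (induction j)
    case 0 then show ?case by simp
  next
    case (Suc j) then show ?case using step[of j] by (simp add: Wrow)
  qed
  moreover have "row 0 = p" by (simp add: row_def h0 fun_eq_iff)
  moreover have "row n = q" using n0 by (simp add: row_def h1 fun_eq_iff)
  ultimately have "Wn p n = Wn q n" by (metis order_refl)
  moreover have "glu p = Wn p n" using glu_eq[OF p] grow[of 0] \<open>row 0 = p\<close> by simp
  moreover have "glu q = Wn q n" using glu_eq[OF q] grow[of n] \<open>row n = q\<close> by simp
  ultimately show ?thesis by simp
qed

lemma glu_cocycle:
  assumes "Y \<subseteq> U" "Y \<subseteq> YU"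
  shows "glu \<in> cocycle G X Y"
  unfolding cocycle_def mem_Collect_eq
proof (intro conjI allI impI)
  fix p show "glu p \<in> carrier G" by (rule glu_carrier)
next
  fix p assume "\<not> pathin X p" then show "glu p = \<one>" by (simp add: glu_def)
next
  fix p assume p: "pathin X p \<and> p ` {0..1} \<subseteq> Y"
  then have pU: "pathin (subtopology X U) p" using assms by (auto simp: pathin_subtopology)
  then have "glu p = u p" by (rule glu_U)
  also have "\<dots> = \<one>" using cocycleD(3)[OF u pU] p assms by auto
  finally show "glu p = \<one>" .
next
  fix p q assume "pathin X p \<and> pathin X q \<and> path_homotopic X p q"
  then show "glu p = glu q" using glu_hom by blast
next
  fix p q assume "pathin X p \<and> pathin X q \<and> p 1 = q 0"
  then show "glu (pjoin p q) = glu p \<otimes> glu q" using glu_join by blast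
qed

lemma restr_glu_U: "restr G X U glu = u"
  using glu_U cocycleD(2)[OF u] by (auto simp: restr_def fun_eq_iff)

lemma restr_glu_V: "restr G X V glu = v"
  using glu_V cocycleD(2)[OF v] by (auto simp: restr_def fun_eq_iff)

end



context group
begin

lemma restr_restr: "restr G (subtopology T S) S' (restr G T S u) = restr G T (S \<inter> S') u"
  by (auto simp: restr_def fun_eq_iff subtopology_subtopology pathin_subtopology)

lemma rmap2:
  assumes G: "group G" and u: "u \<in> cocycle G X Y"
  shows "rmap G (subtopology X S) S' (Y \<inter> S) (rmap G X S Y (cls G X Y u))
       = cls G (subtopology X (S \<inter> S')) (Y \<inter> S \<inter> S') (restr G X (S \<inter> S') u)"
  using rmap_cls[OF G u] rmap_cls[OF G restr_cocycle[OF G u]]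
  by (simp add: restr_restr subtopology_subtopology)

lemma path_in_component:
  assumes "pathin T \<gamma>"
  obtains C where "C \<in> path_components_of T" "\<gamma> ` {0..1} \<subseteq> C"
proof -
  have "\<gamma> 0 \<in> topspace T" using assms by (rule path_start_in_topspace)
  then obtain C where C: "C \<in> path_components_of T" "\<gamma> 0 \<in> C"
    using Union_path_components_of[of T] by blast
  have "\<gamma> ` {0..1} \<subseteq> C"
  proof (rule path_components_of_maximal[OF C(1) path_connectedin_path_image[OF assms]])
    show "\<not> disjnt C (\<gamma> ` {0..1})" using C(2) by (auto simp: disjnt_def)
  qed
  then show ?thesis using that C(1) by blast
qed

lemma component_path:
  assumes C: "C \<in> path_components_of T" and x: "x \<in> C" and y: "y \<in> C"
  obtains g where "pathin T g" "g 0 = x" "g 1 = y"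
proof -
  obtain z where z: "C = Collect (path_component_of T z)"
    using C by (auto simp: path_components_of_def)
  have "path_component_of T z x" "path_component_of T z y" using x y z by auto
  then have "path_component_of T x y"
    by (meson path_component_of_sym path_component_of_trans)
  then show ?thesis using that by (auto simp: path_component_of_set)
qed

lemma path_homotopic_into:
  fixes T :: "'p topology"
  assumes h: "path_homotopic T p q" and C: "C \<in> path_components_of T" and p0: "p 0 \<in> C"
  shows "path_homotopic (subtopology T C) p q"
proof -
  obtain h :: "real \<times> real \<Rightarrow> 'p" where H: "continuous_map (prod_topology (top_of_set {0..1}) (top_of_set {0..1})) T h
      \<and> (\<forall>x. h (0,x) = p x) \<and> (\<forall>x. h (1,x) = q x) \<and> (\<forall>t\<in>{0..1}. h (t,0) = p 0 \<and> h (t,1) = p 1)"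
    using h unfolding path_homotopic_def homotopic_with_def by auto
  have hc: "continuous_map (top_of_set ({0..1}\<times>{0..1})) T h" using H by simp
  have "path_connectedin (top_of_set ({0..1::real}\<times>{0..1::real})) ({0..1}\<times>{0..1})"
  proof -
    have "convex ({0..1::real}\<times>{0..1::real})" by (intro convex_Times) (auto simp: convex_real_interval)
    then have "path_connected ({0..1::real}\<times>{0..1::real})" by (rule convex_imp_path_connected)
    then show ?thesis by (simp add: path_connectedin_subtopology)
  qed
  then have pc: "path_connectedin T (h ` ({0..1}\<times>{0..1}))"
    by (rule path_connectedin_continuous_map_image[OF hc])
  have "h (0,0) \<in> h ` ({0..1}\<times>{0..1})" by auto
  moreover have "h (0,0) = p 0" using H by auto
  ultimately have "h ` ({0..1}\<times>{0..1}) \<subseteq> C"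
    using path_components_of_maximal[OF C pc] p0 by (auto simp: disjnt_def)
  then have "continuous_map (top_of_set ({0..1}\<times>{0..1})) (subtopology T C) h"
    using hc by (auto simp: continuous_map_in_subtopology)
  then show ?thesis using H unfolding path_homotopic_def homotopic_with_def
    by (intro exI[of _ h]) simp
qed

lemma part1:
  assumes G: "group G" and k: "k \<in> H1 G X Y"
  shows "rmap G (subtopology X U) (U \<inter> V) (Y \<inter> U) (rmap G X U Y k)
       = rmap G (subtopology X V) (U \<inter> V) (Y \<inter> V) (rmap G X V Y k)"
proof -
  obtain u where u: "u \<in> cocycle G X Y" "k = cls G X Y u" using H1_cls[OF k] by blast
  have e: "U \<inter> (U \<inter> V) = U \<inter> V" "V \<inter> (U \<inter> V) = U \<inter> V" "Y \<inter> U \<inter> (U \<inter> V) = Y \<inter> (U \<inter> V)"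
    "Y \<inter> V \<inter> (U \<inter> V) = Y \<inter> (U \<inter> V)" by auto
  show ?thesis unfolding u(2) rmap2[OF G u(1)] e ..
qed

end



context group
begin

lemma sub_UV: "subtopology (subtopology X U) (U \<inter> V) = subtopology X (U \<inter> V)"
  "subtopology (subtopology X V) (U \<inter> V) = subtopology X (U \<inter> V)"
proof -
  have e: "U \<inter> (U \<inter> V) = U \<inter> V" "V \<inter> (U \<inter> V) = U \<inter> V" by auto
  show "subtopology (subtopology X U) (U \<inter> V) = subtopology X (U \<inter> V)"
    "subtopology (subtopology X V) (U \<inter> V) = subtopology X (U \<inter> V)"
    unfolding subtopology_subtopology e by simp_all
qed

lemma part2:
  assumes oU: "openin X U" and oV: "openin X V" and cov: "topspace X = U \<union> V"
    and YUV: "Y \<subseteq> U \<inter> V"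
    and comp: "\<And>x. x \<in> topspace X \<inter> (U \<inter> V) \<Longrightarrow>
                 \<exists>y\<in>Y. \<exists>g. pathin (subtopology X (U \<inter> V)) g \<and> g 0 = y \<and> g 1 = x"
  shows "bij_betw (\<lambda>k. (rmap G X U Y k, rmap G X V Y k))
           (H1 G X Y)
           {(\<alpha>, \<beta>). \<alpha> \<in> H1 G (subtopology X U) (Y \<inter> U) \<and> \<beta> \<in> H1 G (subtopology X V) (Y \<inter> V)
                   \<and> rmap G (subtopology X U) (U \<inter> V) (Y \<inter> U) \<alpha>
                   = rmap G (subtopology X V) (U \<inter> V) (Y \<inter> V) \<beta>}"
proof -
  interpret cv: cover G X U V by unfold_locales (use oU oV cov in auto)
  have G: "group G" by (rule is_group)
  have inj: "inj_on (\<lambda>k. (rmap G X U Y k, rmap G X V Y k)) (H1 G X Y)"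
  proof (rule inj_onI)
    fix k1 k2 assume k1: "k1 \<in> H1 G X Y" and k2: "k2 \<in> H1 G X Y"
      and eq: "(rmap G X U Y k1, rmap G X V Y k1) = (rmap G X U Y k2, rmap G X V Y k2)"
    obtain w1 where w1: "w1 \<in> cocycle G X Y" "k1 = cls G X Y w1" using H1_cls[OF k1] by blast
    obtain w2 where w2: "w2 \<in> cocycle G X Y" "k2 = cls G X Y w2" using H1_cls[OF k2] by blast
    have eU: "cls G (subtopology X U) (Y \<inter> U) (restr G X U w1) = cls G (subtopology X U) (Y \<inter> U) (restr G X U w2)"
      using eq by (simp add: w1(2) w2(2) rmap_cls[OF G w1(1)] rmap_cls[OF G w2(1)])
    have eV: "cls G (subtopology X V) (Y \<inter> V) (restr G X V w1) = cls G (subtopology X V) (Y \<inter> V) (restr G X V w2)"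
      using eq by (simp add: w1(2) w2(2) rmap_cls[OF G w1(1)] rmap_cls[OF G w2(1)])
    obtain c where c: "c \<in> cochain0 G (subtopology X U) (Y \<inter> U)"
      "restr G X U w1 = cact G (subtopology X U) c (restr G X U w2)"
      using cls_eqI[OF G restr_cocycle[OF G w1(1)] restr_cocycle[OF G w2(1)] eU] by blast
    obtain d where d: "d \<in> cochain0 G (subtopology X V) (Y \<inter> V)"
      "restr G X V w1 = cact G (subtopology X V) d (restr G X V w2)"
      using cls_eqI[OF G restr_cocycle[OF G w1(1)] restr_cocycle[OF G w2(1)] eV] by blast
    have cc: "c x \<in> carrier G" "d x \<in> carrier G" for x
      using cochainD(1)[OF G c(1)] cochainD(1)[OF G d(1)] by auto
    have onU: "w1 \<sigma> = c (\<sigma> 0) \<otimes> w2 \<sigma> \<otimes> inv (c (\<sigma> 1))" if "pathin (subtopology X U) \<sigma>" for \<sigma>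
    proof -
      have "w1 \<sigma> = restr G X U w1 \<sigma>" using that by (simp add: restr_def)
      also have "\<dots> = c (\<sigma> 0) \<otimes> w2 \<sigma> \<otimes> inv (c (\<sigma> 1))"
        using that unfolding c(2) by (simp add: cact_def restr_def)
      finally show ?thesis .
    qed
    have onV: "w1 \<sigma> = d (\<sigma> 0) \<otimes> w2 \<sigma> \<otimes> inv (d (\<sigma> 1))" if "pathin (subtopology X V) \<sigma>" for \<sigma>
    proof -
      have "w1 \<sigma> = restr G X V w1 \<sigma>" using that by (simp add: restr_def)
      also have "\<dots> = d (\<sigma> 0) \<otimes> w2 \<sigma> \<otimes> inv (d (\<sigma> 1))"
        using that unfolding d(2) by (simp add: cact_def restr_def)
      finally show ?thesis .
    qed
    have cd: "c x = d x" if x: "x \<in> topspace X \<inter> (U \<inter> V)" for x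
    proof -
      obtain y g where y: "y \<in> Y" and g: "pathin (subtopology X (U \<inter> V)) g" "g 0 = y" "g 1 = x"
        using comp[OF x] by blast
      have gU: "pathin (subtopology X U) g" and gV: "pathin (subtopology X V) g"
        using g(1) by (auto simp: pathin_subtopology)
      have "c y = \<one>" "d y = \<one>" using y YUV cochainD(2)[OF G c(1)] cochainD(2)[OF G d(1)] by auto
      then have "w2 g \<otimes> inv (c x) = w2 g \<otimes> inv (d x)"
        using onU[OF gU] onV[OF gV] g cc cocycleD(1)[OF w2(1)] g(1) by (simp add: pathin_subtopology)
      then have "inv (c x) = inv (d x)"
        using cc cocycleD(1)[OF w2(1)] g(1) by (simp add: pathin_subtopology)
      then show ?thesis using cc by (metis inv_inv)
    qed
    define e where "e x = (if x \<in> U then c x else d x)" for x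
    have ec: "e x \<in> carrier G" for x using cc by (simp add: e_def)
    have e: "e \<in> cochain0 G X Y"
      unfolding cochain0_def mem_Collect_eq
    proof (intro conjI ballI allI impI)
      fix x assume "x \<in> Y" then show "e x = \<one>"
        using YUV cochainD(2)[OF G c(1)] by (auto simp: e_def)
    next
      fix x assume "x \<notin> topspace X" then show "e x = \<one>"
        using cochainD(3)[OF G c(1)] cochainD(3)[OF G d(1)] by (auto simp: e_def)
    qed (rule ec)
    have eU: "e x = c x" if "x \<in> U" for x using that by (simp add: e_def)
    have eV: "e x = d x" if "x \<in> V" "x \<in> topspace X" for x using that cd by (auto simp: e_def)
    have pw: "w1 \<sigma> = e (\<sigma> 0) \<otimes> w2 \<sigma> \<otimes> inv (e (\<sigma> 1))" if "cv.inUV \<sigma>" for \<sigma>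
      using that unfolding cv.inUV_def
    proof
      assume s: "pathin (subtopology X U) \<sigma>"
      have "\<sigma> 0 \<in> U" "\<sigma> 1 \<in> U" using s by (auto simp: pathin_subtopology)
      then show ?thesis using onU[OF s] eU by simp
    next
      assume s: "pathin (subtopology X V) \<sigma>"
      have "\<sigma> 0 \<in> V" "\<sigma> 1 \<in> V" "\<sigma> 0 \<in> topspace X" "\<sigma> 1 \<in> topspace X" using s
        by (auto simp: pathin_subtopology path_start_in_topspace path_finish_in_topspace)
      then show ?thesis using onV[OF s] eV by simp
    qed
    have "w1 = cact G X e w2"
    proof
      fix \<gamma>
      show "w1 \<gamma> = cact G X e w2 \<gamma>"
      proof (cases "pathin X \<gamma>")
        case False
        then show ?thesis using cocycleD(2)[OF w1(1)] by (simp add: cact_def)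
      next
        case True
        obtain n where n: "cv.good \<gamma> n" using cv.good_exists[OF True] by blast
        have n0: "0 < n" using n by (simp add: cv.good_def)
        have "w1 \<gamma> = gp G (\<lambda>k. w1 (piece \<gamma> n k)) n" by (rule cc_sub'[OF G w1(1) True n0])
        also have "\<dots> = gp G (\<lambda>k. e (\<gamma> (real k / real n)) \<otimes> w2 (piece \<gamma> n k) \<otimes> inv (e (\<gamma> (real (Suc k) / real n)))) n"
          using n pw by (intro gp_cong) (simp add: cv.good_def piece_def)
        also have "\<dots> = e (\<gamma> (real 0 / real n)) \<otimes> gp G (\<lambda>k. w2 (piece \<gamma> n k)) n \<otimes> inv (e (\<gamma> (real n / real n)))"
          using n cocycleD(1)[OF w2(1)] pathin_piece[OF True] ec
          by (intro gp_tele[where a="\<lambda>k. e (\<gamma> (real k / real n))"]) auto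
        also have "\<dots> = e (\<gamma> 0) \<otimes> w2 \<gamma> \<otimes> inv (e (\<gamma> 1))"
          using n0 cc_sub'[OF G w2(1) True n0] by simp
        finally show ?thesis using True by (simp add: cact_def)
      qed
    qed
    then have "w1 \<in> cls G X Y w2" unfolding cls_def using e by blast
    then show "k1 = k2" unfolding w1(2) w2(2) by (rule cls_eq[OF G w2(1)])
  qed
  have img1: "(\<lambda>k. (rmap G X U Y k, rmap G X V Y k)) ` H1 G X Y \<subseteq>
           {(\<alpha>, \<beta>). \<alpha> \<in> H1 G (subtopology X U) (Y \<inter> U) \<and> \<beta> \<in> H1 G (subtopology X V) (Y \<inter> V)
                   \<and> rmap G (subtopology X U) (U \<inter> V) (Y \<inter> U) \<alpha>
                   = rmap G (subtopology X V) (U \<inter> V) (Y \<inter> V) \<beta>}"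
  proof
    fix x assume "x \<in> (\<lambda>k. (rmap G X U Y k, rmap G X V Y k)) ` H1 G X Y"
    then obtain k where k: "k \<in> H1 G X Y" "x = (rmap G X U Y k, rmap G X V Y k)" by blast
    show "x \<in> {(\<alpha>, \<beta>). \<alpha> \<in> H1 G (subtopology X U) (Y \<inter> U) \<and> \<beta> \<in> H1 G (subtopology X V) (Y \<inter> V)
                   \<and> rmap G (subtopology X U) (U \<inter> V) (Y \<inter> U) \<alpha>
                   = rmap G (subtopology X V) (U \<inter> V) (Y \<inter> V) \<beta>}"
      unfolding k(2) using rmap_H1[OF G k(1)] part1[OF G k(1)] by blast
  qed
  have img2: "{(\<alpha>, \<beta>). \<alpha> \<in> H1 G (subtopology X U) (Y \<inter> U) \<and> \<beta> \<in> H1 G (subtopology X V) (Y \<inter> V)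
                   \<and> rmap G (subtopology X U) (U \<inter> V) (Y \<inter> U) \<alpha>
                   = rmap G (subtopology X V) (U \<inter> V) (Y \<inter> V) \<beta>}
      \<subseteq> (\<lambda>k. (rmap G X U Y k, rmap G X V Y k)) ` H1 G X Y"
  proof (clarify)
    fix \<alpha> \<beta> assume a: "\<alpha> \<in> H1 G (subtopology X U) (Y \<inter> U)" and b: "\<beta> \<in> H1 G (subtopology X V) (Y \<inter> V)"
      and ab: "rmap G (subtopology X U) (U \<inter> V) (Y \<inter> U) \<alpha> = rmap G (subtopology X V) (U \<inter> V) (Y \<inter> V) \<beta>"
    obtain u0 where u0: "u0 \<in> cocycle G (subtopology X U) (Y \<inter> U)" "\<alpha> = cls G (subtopology X U) (Y \<inter> U) u0"
      using H1_cls[OF a] by blast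
    obtain v0 where v0: "v0 \<in> cocycle G (subtopology X V) (Y \<inter> V)" "\<beta> = cls G (subtopology X V) (Y \<inter> V) v0"
      using H1_cls[OF b] by blast
    define Z where "Z = subtopology X (U \<inter> V)"
    define YZ where "YZ = Y \<inter> (U \<inter> V)"
    have yz: "Y \<inter> U \<inter> (U \<inter> V) = YZ" "Y \<inter> V \<inter> (U \<inter> V) = YZ" by (auto simp: YZ_def)
    define ru where "ru = restr G (subtopology X U) (U \<inter> V) u0"
    define rv where "rv = restr G (subtopology X V) (U \<inter> V) v0"
    have ruc: "ru \<in> cocycle G Z YZ" using restr_cocycle[OF G u0(1), of "U \<inter> V"]
      by (simp add: ru_def Z_def sub_UV yz)
    have rvc: "rv \<in> cocycle G Z YZ" using restr_cocycle[OF G v0(1), of "U \<inter> V"]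
      by (simp add: rv_def Z_def sub_UV yz)
    have "cls G Z YZ rv = cls G Z YZ ru"
      using ab unfolding u0(2) v0(2) rmap_cls[OF G u0(1)] rmap_cls[OF G v0(1)]
      by (simp add: ru_def rv_def Z_def sub_UV yz)
    then obtain c where c: "c \<in> cochain0 G Z YZ" "rv = cact G Z c ru"
      using cls_eqI[OF G rvc ruc] by blast
    have cc: "c x \<in> carrier G" for x using cochainD(1)[OF G c(1)] .
    have cV: "c \<in> cochain0 G (subtopology X V) (Y \<inter> V)"
      unfolding cochain0_def mem_Collect_eq
    proof (intro conjI ballI allI impI)
      fix x assume x: "x \<in> Y \<inter> V"
      show "c x = \<one>"
      proof (cases "x \<in> topspace Z")
        case True then show ?thesis using x cochainD(2)[OF G c(1)] by (auto simp: YZ_def Z_def)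
      next
        case False then show ?thesis using cochainD(3)[OF G c(1)] by blast
      qed
    next
      fix x assume "x \<notin> topspace (subtopology X V)"
      then have "x \<notin> topspace Z" by (auto simp: Z_def)
      then show "c x = \<one>" using cochainD(3)[OF G c(1)] by blast
    qed (rule cc)
    define v' where "v' = cact G (subtopology X V) (\<lambda>x. inv (c x)) v0"
    have v'c: "v' \<in> cocycle G (subtopology X V) (Y \<inter> V)"
      unfolding v'_def by (rule cact_cocycle[OF G cochain_inv[OF G cV] v0(1)])
    have "v' \<in> cls G (subtopology X V) (Y \<inter> V) v0"
      unfolding v'_def cls_def using cochain_inv[OF G cV] by blast
    then have clv: "cls G (subtopology X V) (Y \<inter> V) v' = \<beta>"
      unfolding v0(2) by (rule cls_eq[OF G v0(1)])
    have agree: "u0 \<sigma> = v' \<sigma>" if s: "pathin (subtopology X (U \<inter> V)) \<sigma>" for \<sigma>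
    proof -
      have sV: "pathin (subtopology X V) \<sigma>" and sZ: "pathin Z \<sigma>"
        and sUV: "pathin (subtopology (subtopology X U) (U \<inter> V)) \<sigma>"
        and sVV: "pathin (subtopology (subtopology X V) (U \<inter> V)) \<sigma>"
        using s by (auto simp: pathin_subtopology Z_def sub_UV)
      have "rv \<sigma> = v0 \<sigma>" using sVV by (simp add: rv_def restr_def)
      moreover have "ru \<sigma> = u0 \<sigma>" using sUV by (simp add: ru_def restr_def)
      moreover have "rv \<sigma> = c (\<sigma> 0) \<otimes> ru \<sigma> \<otimes> inv (c (\<sigma> 1))"
        using sZ by (simp add: c(2) cact_def)
      ultimately have v0s: "v0 \<sigma> = c (\<sigma> 0) \<otimes> u0 \<sigma> \<otimes> inv (c (\<sigma> 1))" by simp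
      have uc: "u0 \<sigma> \<in> carrier G" using cocycleD(1)[OF u0(1)] sUV by (auto simp: pathin_subtopology)
      have "v' \<sigma> = inv (c (\<sigma> 0)) \<otimes> v0 \<sigma> \<otimes> inv (inv (c (\<sigma> 1)))"
        using sV by (simp add: v'_def cact_def)
      also have "\<dots> = u0 \<sigma>" using cc uc unfolding v0s
        by (simp add: m_assoc[symmetric]) (simp add: m_assoc)
      finally show ?thesis by simp
    qed
    have cvr: "cover G X U V"
      by (rule cover.intro[OF is_group cover_axioms.intro[OF oU oV cov]])
    interpret gl: glue G X U V u0 v' "Y \<inter> U" "Y \<inter> V"
      by (rule glue.intro[OF cvr glue_axioms.intro[OF u0(1) v'c agree]])
    have glc: "gl.glu \<in> cocycle G X Y" by (rule gl.glu_cocycle) (use YUV in auto)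
    have r1: "rmap G X U Y (cls G X Y gl.glu) = \<alpha>"
      unfolding rmap_cls[OF G glc] gl.restr_glu_U u0(2) ..
    have r2: "rmap G X V Y (cls G X Y gl.glu) = \<beta>"
      unfolding rmap_cls[OF G glc] gl.restr_glu_V clv ..
    have mem: "cls G X Y gl.glu \<in> H1 G X Y" unfolding H1_def using glc by (rule imageI)
    show "(\<alpha>, \<beta>) \<in> (\<lambda>k. (rmap G X U Y k, rmap G X V Y k)) ` H1 G X Y"
      by (rule image_eqI[OF _ mem]) (simp only: r1 r2)
  qed
  show ?thesis unfolding bij_betw_def by (intro conjI inj subset_antisym img1 img2)
qed

end



context group
begin

lemma part3:
  fixes A :: "nat \<Rightarrow> 'p set" and a :: "nat \<Rightarrow> 'p" and X :: "'p topology"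
  assumes comps: "path_components_of (subtopology X W) = A ` I" and injA: "inj_on A I"
    and aA: "\<And>i. i \<in> I \<Longrightarrow> a i \<in> A i" and Yd: "Y = a ` I"
  shows "bij_betw (\<lambda>\<theta>. \<lambda>i\<in>I. rmap G (subtopology X W) (A i) (Y \<inter> W) \<theta>)
           (H1 G (subtopology X W) (Y \<inter> W))
           (\<Pi>\<^sub>E i\<in>I. H1 G (subtopology X (A i)) {a i})"
proof -
  have G: "group G" by (rule is_group)
  define Z where "Z = subtopology X W"
  have Acomp: "A i \<in> path_components_of Z" if "i \<in> I" for i using comps that by (auto simp: Z_def)
  have AsubZ: "A i \<subseteq> topspace Z" if "i \<in> I" for i using path_components_of_subset[OF Acomp[OF that]] .
  have AsubW: "A i \<subseteq> W" if "i \<in> I" for i using AsubZ[OF that] by (auto simp: Z_def)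
  have ZA: "subtopology Z (A i) = subtopology X (A i)" if "i \<in> I" for i
    unfolding Z_def subtopology_subtopology using AsubW[OF that] by (simp add: Int_absorb1)
  have uniq: "i = j" if "i \<in> I" "j \<in> I" "x \<in> A i" "x \<in> A j" for i j x
  proof -
    have "A i = A j" using path_components_of_overlap[OF Acomp[OF that(1)] Acomp[OF that(2)]] that(3,4) by blast
    then show ?thesis using injA that(1,2) by (auto dest: inj_onD)
  qed
  have YA: "(Y \<inter> W) \<inter> A i = {a i}" if i: "i \<in> I" for i
  proof
    show "{a i} \<subseteq> Y \<inter> W \<inter> A i" using aA[OF i] AsubW[OF i] Yd i by auto
    show "Y \<inter> W \<inter> A i \<subseteq> {a i}"
    proof
      fix x assume "x \<in> Y \<inter> W \<inter> A i"
      then obtain j where j: "j \<in> I" "x = a j" "x \<in> A i" using Yd by auto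
      then have "j = i" using uniq[OF j(1) i] aA[OF j(1)] by auto
      then show "x \<in> {a i}" using j by simp
    qed
  qed
  have pathA: "\<exists>i\<in>I. pathin (subtopology X (A i)) \<gamma>" if g: "pathin Z \<gamma>" for \<gamma>
  proof -
    obtain C where C: "C \<in> path_components_of Z" "\<gamma> ` {0..1} \<subseteq> C" using path_in_component[OF g] by blast
    then obtain i where i: "i \<in> I" "C = A i" using comps by (auto simp: Z_def)
    have "pathin X \<gamma>" using g by (auto simp: Z_def pathin_subtopology)
    then show ?thesis using i C by (auto simp: pathin_subtopology)
  qed
  have pathZ: "pathin Z \<gamma>" if "i \<in> I" "pathin (subtopology X (A i)) \<gamma>" for i \<gamma>
    using that AsubW by (auto simp: Z_def pathin_subtopology)
  define idx where "idx x = (SOME i. i \<in> I \<and> x \<in> A i)" for x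
  have idx_eq: "idx x = i" if "i \<in> I" "x \<in> A i" for i x
  proof -
    have "idx x \<in> I \<and> x \<in> A (idx x)" unfolding idx_def by (rule someI[of _ i]) (use that in auto)
    then show ?thesis using uniq that by blast
  qed
  have Ys: "Y \<inter> W \<inter> A i = {a i}" if "i \<in> I" for i using YA[OF that] .
  have rmapA: "rmap G Z (A i) (Y \<inter> W) (cls G Z (Y \<inter> W) u) = cls G (subtopology X (A i)) {a i} (restr G Z (A i) u)"
    if "u \<in> cocycle G Z (Y \<inter> W)" "i \<in> I" for u i
    using rmap_cls[OF G that(1), of "A i"] ZA[OF that(2)] Ys[OF that(2)] by simp
  have restrAc: "restr G Z (A i) u \<in> cocycle G (subtopology X (A i)) {a i}"
    if "u \<in> cocycle G Z (Y \<inter> W)" "i \<in> I" for u i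
    using restr_cocycle[OF G that(1), of "A i"] ZA[OF that(2)] Ys[OF that(2)] by simp
  have restrA: "restr G Z (A i) u p = (if pathin (subtopology X (A i)) p then u p else \<one>)" if "i \<in> I" for u i p
    using ZA[OF that] by (simp add: restr_def)
  define \<Phi> where "\<Phi> = (\<lambda>\<theta>. \<lambda>i\<in>I. rmap G Z (A i) (Y \<inter> W) \<theta>)"
  have maps: "\<Phi> \<theta> \<in> (\<Pi>\<^sub>E i\<in>I. H1 G (subtopology X (A i)) {a i})" if th: "\<theta> \<in> H1 G Z (Y \<inter> W)" for \<theta>
  proof -
    obtain u where u: "u \<in> cocycle G Z (Y \<inter> W)" "\<theta> = cls G Z (Y \<inter> W) u" using H1_cls[OF th] by blast
    have "rmap G Z (A i) (Y \<inter> W) \<theta> \<in> H1 G (subtopology X (A i)) {a i}" if "i \<in> I" for i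
      unfolding u(2) rmapA[OF u(1) that] H1_def using restrAc[OF u(1) that] by (rule imageI)
    then show ?thesis unfolding \<Phi>_def by simp
  qed
  have inj: "inj_on \<Phi> (H1 G Z (Y \<inter> W))"
  proof (rule inj_onI)
    fix \<theta>1 \<theta>2 assume t1: "\<theta>1 \<in> H1 G Z (Y \<inter> W)" and t2: "\<theta>2 \<in> H1 G Z (Y \<inter> W)" and eq: "\<Phi> \<theta>1 = \<Phi> \<theta>2"
    obtain u1 where u1: "u1 \<in> cocycle G Z (Y \<inter> W)" "\<theta>1 = cls G Z (Y \<inter> W) u1" using H1_cls[OF t1] by blast
    obtain u2 where u2: "u2 \<in> cocycle G Z (Y \<inter> W)" "\<theta>2 = cls G Z (Y \<inter> W) u2" using H1_cls[OF t2] by blast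
    have "\<exists>c. c \<in> cochain0 G (subtopology X (A i)) {a i} \<and>
              restr G Z (A i) u1 = cact G (subtopology X (A i)) c (restr G Z (A i) u2)" if i: "i \<in> I" for i
    proof -
      have "\<Phi> \<theta>1 i = \<Phi> \<theta>2 i" using eq by simp
      then have "cls G (subtopology X (A i)) {a i} (restr G Z (A i) u1) = cls G (subtopology X (A i)) {a i} (restr G Z (A i) u2)"
        using i by (simp add: \<Phi>_def u1(2) u2(2) rmapA[OF u1(1) i] rmapA[OF u2(1) i])
      then show ?thesis using cls_eqI[OF G restrAc[OF u1(1) i] restrAc[OF u2(1) i]] by blast
    qed
    then obtain C where C: "\<And>i. i \<in> I \<Longrightarrow> C i \<in> cochain0 G (subtopology X (A i)) {a i} \<and>
              restr G Z (A i) u1 = cact G (subtopology X (A i)) (C i) (restr G Z (A i) u2)"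
      by metis
    have Cc: "C i x \<in> carrier G" if "i \<in> I" for i x using cochainD(1)[OF G conjunct1[OF C[OF that]]] .
    define e where "e x = (if \<exists>i\<in>I. x \<in> A i then C (idx x) x else \<one>)" for x
    have eA: "e x = C i x" if "i \<in> I" "x \<in> A i" for i x
      using that idx_eq[OF that] by (auto simp: e_def)
    have e: "e \<in> cochain0 G Z (Y \<inter> W)"
      unfolding cochain0_def mem_Collect_eq
    proof (intro conjI ballI allI impI)
      fix x show "e x \<in> carrier G" using Cc idx_eq by (auto simp: e_def)
    next
      fix x assume "x \<in> Y \<inter> W"
      then obtain j where j: "j \<in> I" "x = a j" using Yd by auto
      then show "e x = \<one>" using eA[OF j(1) aA[OF j(1)]] cochainD(2)[OF G conjunct1[OF C[OF j(1)]], of "a j"] by simp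
    next
      fix x assume "x \<notin> topspace Z"
      then have "\<not> (\<exists>i\<in>I. x \<in> A i)" using AsubZ by blast
      then show "e x = \<one>" by (simp add: e_def)
    qed
    have "u1 = cact G Z e u2"
    proof
      fix \<gamma>
      show "u1 \<gamma> = cact G Z e u2 \<gamma>"
      proof (cases "pathin Z \<gamma>")
        case False
        then show ?thesis using cocycleD(2)[OF u1(1)] by (simp add: cact_def)
      next
        case True
        then obtain i where i: "i \<in> I" "pathin (subtopology X (A i)) \<gamma>" using pathA by blast
        have ends: "\<gamma> 0 \<in> A i" "\<gamma> 1 \<in> A i" using i(2) by (auto simp: pathin_subtopology)
        have "u1 \<gamma> = restr G Z (A i) u1 \<gamma>" using restrA[OF i(1)] i(2) by simp
        also have "\<dots> = cact G (subtopology X (A i)) (C i) (restr G Z (A i) u2) \<gamma>" using C[OF i(1)] by simp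
        also have "\<dots> = C i (\<gamma> 0) \<otimes> u2 \<gamma> \<otimes> inv (C i (\<gamma> 1))"
          using i(2) restrA[OF i(1)] by (simp add: cact_def)
        also have "\<dots> = cact G Z e u2 \<gamma>" using True ends eA[OF i(1)] by (simp add: cact_def)
        finally show ?thesis .
      qed
    qed
    then have "u1 \<in> cls G Z (Y \<inter> W) u2" unfolding cls_def using e by blast
    then show "\<theta>1 = \<theta>2" unfolding u1(2) u2(2) by (rule cls_eq[OF G u2(1)])
  qed
  have surj: "(\<Pi>\<^sub>E i\<in>I. H1 G (subtopology X (A i)) {a i}) \<subseteq> \<Phi> ` H1 G Z (Y \<inter> W)"
  proof
    fix \<beta> assume b: "\<beta> \<in> (\<Pi>\<^sub>E i\<in>I. H1 G (subtopology X (A i)) {a i})"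
    have ex: "\<forall>i\<in>I. \<exists>v. v \<in> cocycle G (subtopology X (A i)) {a i} \<and> \<beta> i = cls G (subtopology X (A i)) {a i} v"
    proof
      fix i assume i: "i \<in> I"
      show "\<exists>v. v \<in> cocycle G (subtopology X (A i)) {a i} \<and> \<beta> i = cls G (subtopology X (A i)) {a i} v"
        using H1_cls[OF PiE_mem[OF b i]] by blast
    qed
    obtain vv where vv0: "\<forall>i\<in>I. vv i \<in> cocycle G (subtopology X (A i)) {a i} \<and>
        \<beta> i = cls G (subtopology X (A i)) {a i} (vv i)" using bchoice[OF ex] by blast
    have vv: "vv i \<in> cocycle G (subtopology X (A i)) {a i} \<and> \<beta> i = cls G (subtopology X (A i)) {a i} (vv i)"
      if "i \<in> I" for i using vv0 that by blast
    define u where "u \<gamma> = (if pathin Z \<gamma> then vv (idx (\<gamma> 0)) \<gamma> else \<one>)" for \<gamma>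
    have uA: "u \<gamma> = vv i \<gamma>" if "i \<in> I" "pathin (subtopology X (A i)) \<gamma>" for i \<gamma>
    proof -
      have "\<gamma> 0 \<in> A i" using that(2) by (auto simp: pathin_subtopology)
      then show ?thesis using pathZ[OF that] idx_eq[OF that(1)] by (simp add: u_def)
    qed
    have uc: "u \<in> cocycle G Z (Y \<inter> W)"
      unfolding cocycle_def mem_Collect_eq
    proof (intro conjI allI impI)
      fix p assume "pathin Z p"
      then obtain i where i: "i \<in> I" "pathin (subtopology X (A i)) p" using pathA by blast
      then show "u p \<in> carrier G" using uA[OF i] cocycleD(1)[OF conjunct1[OF vv[OF i(1)]] i(2)] by simp
    next
      fix p assume "\<not> pathin Z p" then show "u p = \<one>" by (simp add: u_def)
    next
      fix p assume p: "pathin Z p \<and> p ` {0..1} \<subseteq> Y \<inter> W"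
      then obtain i where i: "i \<in> I" "pathin (subtopology X (A i)) p" using pathA by blast
      then have "p ` {0..1} \<subseteq> A i" by (auto simp: pathin_subtopology)
      then have "p ` {0..1} \<subseteq> {a i}" using p YA[OF i(1)] by blast
      then show "u p = \<one>" using uA[OF i] cocycleD(3)[OF conjunct1[OF vv[OF i(1)]] i(2)] by simp
    next
      fix p q assume pq: "pathin Z p \<and> pathin Z q \<and> path_homotopic Z p q"
      then obtain i where i: "i \<in> I" "pathin (subtopology X (A i)) p" using pathA by blast
      have p0: "p 0 \<in> A i" using i(2) by (auto simp: pathin_subtopology)
      have h: "path_homotopic (subtopology X (A i)) p q"
        using path_homotopic_into[of Z p q "A i"] Acomp[OF i(1)] p0 pq ZA[OF i(1)] by simp
      have "continuous_map (top_of_set {0..1}) (subtopology X (A i)) q"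
        using homotopic_with_imp_continuous_maps[OF h[unfolded path_homotopic_def]] by blast
      then have qA: "pathin (subtopology X (A i)) q" by (simp add: pathin_def)
      show "u p = u q" using uA[OF i] uA[OF i(1) qA] cocycleD(4)[OF conjunct1[OF vv[OF i(1)]] i(2) qA h] by simp
    next
      fix p q assume pq: "pathin Z p \<and> pathin Z q \<and> p 1 = q 0"
      then obtain i where i: "i \<in> I" "pathin (subtopology X (A i)) p" using pathA by blast
      obtain j where j: "j \<in> I" "pathin (subtopology X (A j)) q" using pathA pq by blast
      have "p 1 \<in> A i" "q 0 \<in> A j" using i(2) j(2) by (auto simp: pathin_subtopology)
      then have "j = i" using uniq[OF i(1) j(1)] pq by auto
      then have qA: "pathin (subtopology X (A i)) q" using j by simp
      have pj: "pathin (subtopology X (A i)) (pjoin p q)" using pathin_pjoin[OF i(2) qA] pq by simp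
      have e1: "p 1 = q 0" using pq by blast
      have "u (pjoin p q) = vv i (pjoin p q)" by (rule uA[OF i(1) pj])
      also have "\<dots> = vv i p \<otimes> vv i q" by (rule cocycleD(5)[OF conjunct1[OF vv[OF i(1)]] i(2) qA e1])
      also have "\<dots> = u p \<otimes> u q" by (simp only: uA[OF i] uA[OF i(1) qA])
      finally show "u (pjoin p q) = u p \<otimes> u q" .
    qed
    have "\<Phi> (cls G Z (Y \<inter> W) u) = \<beta>"
    proof (rule ext)
      fix i show "\<Phi> (cls G Z (Y \<inter> W) u) i = \<beta> i"
      proof (cases "i \<in> I")
        case False
        have "\<beta> i = undefined" by (rule PiE_arb[OF b False])
        then show ?thesis using False by (simp add: \<Phi>_def)
      next
        case True
        have "restr G Z (A i) u = vv i"
        proof (rule ext)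
          fix p show "restr G Z (A i) u p = vv i p"
            using restrA[OF True] uA[OF True] cocycleD(2)[OF conjunct1[OF vv[OF True]]] by simp
        qed
        then have "rmap G Z (A i) (Y \<inter> W) (cls G Z (Y \<inter> W) u) = \<beta> i"
          unfolding rmapA[OF uc True] using conjunct2[OF vv[OF True]] by simp
        then show ?thesis using True by (simp add: \<Phi>_def)
      qed
    qed
    moreover have "cls G Z (Y \<inter> W) u \<in> H1 G Z (Y \<inter> W)" unfolding H1_def using uc by (rule imageI)
    ultimately show "\<beta> \<in> \<Phi> ` H1 G Z (Y \<inter> W)" by (rule image_eqI[OF sym])
  qed
  have "bij_betw \<Phi> (H1 G Z (Y \<inter> W)) (\<Pi>\<^sub>E i\<in>I. H1 G (subtopology X (A i)) {a i})"
    unfolding bij_betw_def by (intro conjI inj subset_antisym image_subsetI maps surj)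
  then show ?thesis by (simp add: \<Phi>_def Z_def)
qed

end



theorem theorem6p8:
  fixes X :: "'a topology" and U V :: "'a set" and m :: nat
    and A :: "nat \<Rightarrow> 'a set" and a :: "nat \<Rightarrow> 'a" and Y :: "'a set"
    and G :: "('g,'b) monoid_scheme"
  assumes "openin X U" and "openin X V"
    and "path_connectedin X U" and "path_connectedin X V"
    and "topspace X = U \<union> V"
    and "m \<ge> 1"
    and "path_components_of (subtopology X (U \<inter> V)) = A ` {0..m}"
    and "inj_on A {0..m}"
    and "\<And>i. i \<le> m \<Longrightarrow> a i \<in> A i"
    and "Y = a ` {0..m}"
    and "group G"
  shows "(\<forall>k \<in> H1 G X Y.
            rmap G (subtopology X U) (U \<inter> V) (Y \<inter> U) (rmap G X U Y k)
          = rmap G (subtopology X V) (U \<inter> V) (Y \<inter> V) (rmap G X V Y k))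
       \<and> bij_betw (\<lambda>k. (rmap G X U Y k, rmap G X V Y k))
           (H1 G X Y)
           {(\<alpha>, \<beta>). \<alpha> \<in> H1 G (subtopology X U) (Y \<inter> U) \<and> \<beta> \<in> H1 G (subtopology X V) (Y \<inter> V)
                   \<and> rmap G (subtopology X U) (U \<inter> V) (Y \<inter> U) \<alpha>
                   = rmap G (subtopology X V) (U \<inter> V) (Y \<inter> V) \<beta>}
       \<and> bij_betw (\<lambda>\<theta>. \<lambda>i\<in>{0..m}. rmap G (subtopology X (U \<inter> V)) (A i) (Y \<inter> (U \<inter> V)) \<theta>)
           (H1 G (subtopology X (U \<inter> V)) (Y \<inter> (U \<inter> V)))
           (\<Pi>\<^sub>E i\<in>{0..m}. H1 G (subtopology X (A i)) {a i})"
proof -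
  have G: "group G" by (rule assms(11))
  interpret group G by (rule G)
  define Z where "Z = subtopology X (U \<inter> V)"
  have Acomp: "A i \<in> path_components_of Z" if "i \<le> m" for i
    using assms(7) that by (auto simp: Z_def)
  have AsubUV: "A i \<subseteq> U \<inter> V" if "i \<le> m" for i
    using path_components_of_subset[OF Acomp[OF that]] by (auto simp: Z_def)
  have YUV: "Y \<subseteq> U \<inter> V"
  proof
    fix y assume "y \<in> Y"
    then obtain i where i: "i \<le> m" "y = a i" using assms(10) by auto
    then show "y \<in> U \<inter> V" using assms(9)[OF i(1)] AsubUV[OF i(1)] by blast
  qed
  have comp: "\<exists>y\<in>Y. \<exists>g. pathin (subtopology X (U \<inter> V)) g \<and> g 0 = y \<and> g 1 = x"
    if x: "x \<in> topspace X \<inter> (U \<inter> V)" for x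
  proof -
    have "x \<in> topspace Z" using x by (simp add: Z_def)
    then obtain C where C: "C \<in> path_components_of Z" "x \<in> C"
      using Union_path_components_of[of Z] by blast
    then obtain i where i: "i \<le> m" "C = A i" using assms(7) by (auto simp: Z_def)
    have ai: "a i \<in> C" using assms(9)[OF i(1)] i(2) by simp
    obtain g where g: "pathin Z g" "g 0 = a i" "g 1 = x" using component_path[OF C(1) ai C(2)] by blast
    have "a i \<in> Y" using assms(10) i(1) by auto
    then show ?thesis using g by (auto simp: Z_def)
  qed
  have aA: "a i \<in> A i" if "i \<in> {0..m}" for i using assms(9) that by auto
  show ?thesis
  proof (intro conjI)
    show "\<forall>k\<in>H1 G X Y. rmap G (subtopology X U) (U \<inter> V) (Y \<inter> U) (rmap G X U Y k)
          = rmap G (subtopology X V) (U \<inter> V) (Y \<inter> V) (rmap G X V Y k)"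
      using part1[OF G] by blast
    show "bij_betw (\<lambda>k. (rmap G X U Y k, rmap G X V Y k))
           (H1 G X Y)
           {(\<alpha>, \<beta>). \<alpha> \<in> H1 G (subtopology X U) (Y \<inter> U) \<and> \<beta> \<in> H1 G (subtopology X V) (Y \<inter> V)
                   \<and> rmap G (subtopology X U) (U \<inter> V) (Y \<inter> U) \<alpha>
                   = rmap G (subtopology X V) (U \<inter> V) (Y \<inter> V) \<beta>}"
      by (rule part2[OF assms(1) assms(2) assms(5) YUV comp])
    show "bij_betw (\<lambda>\<theta>. \<lambda>i\<in>{0..m}. rmap G (subtopology X (U \<inter> V)) (A i) (Y \<inter> (U \<inter> V)) \<theta>)
           (H1 G (subtopology X (U \<inter> V)) (Y \<inter> (U \<inter> V)))
           (\<Pi>\<^sub>E i\<in>{0..m}. H1 G (subtopology X (A i)) {a i})"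
      by (rule part3[OF assms(7) assms(8) aA assms(10)])
  qed
qed

end
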